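(* Let $V(x,y)=(1-\langle x,y\rangle^2)^{1/2}$ for $x,y\in\mathbb S^{d-1}$, and consider $I_{V^s}(\mu)=\iint V(x,y)^s\,d\mu(x)d\mu(y)$ over $\mu\in\mathcal P(\mathbb S^{d-1})$. Then: (i) if $0<s<2$, $\sigma$ is a maximizer of $I_{V^s}$; (ii) if $s=2$, $\mu$ is a maximizer of $I_{V^s}$ if and only if $\mu$ is isotropic; (iii) if $s>2$, the only maximizers of $I_{V^s}$ (up to central symmetry and rotation) are the measures $\frac1d\sum_{i=1}^d\delta_{e_i}$, where $\{e_i\}_{i=1}^d$ is an orthonormal basis of $\mathbb R^d$.
   Context: $\mathbb S^{d-1}$ is the unit sphere in $\mathbb R^d$, $\mathcal P(\mathbb S^{d-1})$ the Borel probability measures on it, $\sigma$ the normalized surface measure. $\mu$ is isotropic if $\int xx^T\,d\mu(x)=\frac1dI_d$. *)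

theory Defs
  imports "HOL-Probability.Probability"
begin

text \<open>Points of the sphere S^{d-1} are vectors of type real^'n, d = CARD('n).\<close>

definition V :: "real^'n \<Rightarrow> real^'n \<Rightarrow> real" where
  "V x y = sqrt (1 - (x \<bullet> y)\<^sup>2)"

text \<open>Borel probability measures on the unit sphere (as Borel measures on R^d
  giving full mass to the sphere).\<close>
definition sphere_prob :: "(real^'n) measure \<Rightarrow> bool" where
  "sphere_prob \<mu> \<longleftrightarrow> prob_space \<mu> \<and> sets \<mu> = sets borel \<and> emeasure \<mu> (sphere 0 1) = 1"

definition I_Vs :: "real \<Rightarrow> (real^'n) measure \<Rightarrow> real" where
  "I_Vs s \<mu> = (\<integral>x. (\<integral>y. V x y powr s \<partial>\<mu>) \<partial>\<mu>)"

definition maximizer :: "real \<Rightarrow> (real^'n) measure \<Rightarrow> bool" where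
  "maximizer s \<mu> \<longleftrightarrow> sphere_prob \<mu> \<and> (\<forall>\<nu>::(real^'n) measure. sphere_prob \<nu> \<longrightarrow> I_Vs s \<nu> \<le> I_Vs s \<mu>)"

text \<open>Normalized surface measure: radial projection of the uniform probability
  measure on the open unit ball (the cone-measure description of sigma).\<close>
definition sigma_sphere :: "(real^'n) measure" where
  "sigma_sphere = distr (uniform_measure lborel (ball 0 1)) borel (\<lambda>x. x /\<^sub>R norm x)"

definition isotropic :: "(real^'n) measure \<Rightarrow> bool" where
  "isotropic \<mu> \<longleftrightarrow>
     integral\<^sup>L \<mu> (\<lambda>x. (\<chi> i j. x $ i * x $ j) :: real^'n^'n) = (1 / real CARD('n)) *\<^sub>R mat 1"

definition orthonormal_basis :: "('n \<Rightarrow> real^'n) \<Rightarrow> bool" where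
  "orthonormal_basis e \<longleftrightarrow> (\<forall>i j. e i \<bullet> e j = (if i = j then 1 else 0))"

end

theory Submission
  imports Defs
begin

typedef 'a wo = "{..<max 1 CARD('a)} :: nat set" by (rule exI[of _ 0]) simp

instantiation wo :: (type) linorder
begin
definition "less_eq_wo (x::'a wo) (y::'a wo) \<longleftrightarrow> Rep_wo x \<le> Rep_wo y"
definition "less_wo (x::'a wo) (y::'a wo) \<longleftrightarrow> Rep_wo x < Rep_wo y"
instance by standard (auto simp: less_eq_wo_def less_wo_def Rep_wo_inject)
end

instance wo :: (type) finite
proof
  have "(UNIV :: 'a wo set) = Abs_wo ` {..<max 1 CARD('a)}"
    using type_definition.Abs_image[OF type_definition_wo[where 'a='a]] by simp
  then show "finite (UNIV :: 'a wo set)" by (metis finite_imageI finite_lessThan)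
qed

instance wo :: (type) wellorder
proof
  fix P :: "'a wo \<Rightarrow> bool" and a
  assume H: "\<And>x. (\<And>y. y < x \<Longrightarrow> P y) \<Longrightarrow> P x"
  have "\<forall>x. Rep_wo x = n \<longrightarrow> P x" for n
    by (induction n rule: less_induct) (metis H less_wo_def)
  then show "P a" by blast
qed

lemma card_wo: "CARD('a::finite wo) = CARD('a)"
proof -
  have "CARD('a wo) = card {..<max 1 CARD('a)}"
    using type_definition.card[OF type_definition_wo[where 'a='a]] by simp
  also have "\<dots> = CARD('a)" using finite_UNIV_card_ge_0[where 'a='a] by (simp add: max_def)
  finally show ?thesis .
qed

lemma Basis_cart_eq: "(Basis :: (real^'n) set) = range (\<lambda>i. axis i 1)"
  by (auto simp: Basis_vec_def)

lemma prod_Basis_cart: "(\<Prod>b\<in>(Basis :: (real^'n) set). f b) = (\<Prod>i\<in>UNIV. f (axis i 1))"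
proof -
  have "inj (\<lambda>i::'n. axis i (1::real))" by (auto simp: inj_on_def axis_eq_axis)
  then show ?thesis unfolding Basis_cart_eq by (simp add: prod.reindex)
qed

definition reidx :: "('m \<Rightarrow> 'n) \<Rightarrow> real^'n \<Rightarrow> real^'m" where
  "reidx h x = (\<chi> j. x $ h j)"

lemma reidx_nth[simp]: "reidx h x $ j = x $ h j" by (simp add: reidx_def)

lemma reidx_measurable[measurable]: "reidx h \<in> borel_measurable borel"
proof -
  have "linear (reidx h)" by (auto simp: linear_iff vec_eq_iff)
  then show ?thesis by (intro borel_measurable_continuous_onI linear_continuous_on) (simp add: linear_conv_bounded_linear)
qed

lemma lborel_reidx:
  fixes h :: "'m::finite \<Rightarrow> 'n::finite"
  assumes h: "bij h"
  shows "distr lborel borel (reidx h) = (lborel :: (real^'m) measure)"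
proof -
  have "lborel = distr lborel borel (reidx h)"
  proof (rule lborel_eqI)
    fix l u :: "real^'m"
    assume le: "\<And>b. b \<in> Basis \<Longrightarrow> l \<bullet> b \<le> u \<bullet> b"
    have le': "l $ j \<le> u $ j" for j using le[of "axis j 1"] by (auto simp: Basis_cart_eq inner_axis)
    have pre: "reidx h -` box l u = box (reidx (inv h) l) (reidx (inv h) u)"
      using h by (auto simp: mem_box_cart bij_inv_eq_iff) (metis bij_inv_eq_iff h)+
    have "emeasure (distr lborel borel (reidx h)) (box l u) = emeasure lborel (reidx h -` box l u)"
      by (subst emeasure_distr) auto
    also have "\<dots> = (\<Prod>b\<in>Basis. (reidx (inv h) u - reidx (inv h) l) \<bullet> b)"
      unfolding pre
      by (rule emeasure_lborel_box) (auto simp: Basis_cart_eq inner_axis le')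
    also have "\<dots> = (\<Prod>i\<in>UNIV. u $ inv h i - l $ inv h i)"
      by (simp add: prod_Basis_cart inner_axis)
    also have "\<dots> = (\<Prod>j\<in>UNIV. u $ j - l $ j)"
      using prod.reindex_bij_betw[OF bij_betw_inv_into[OF h], of "\<lambda>j. u $ j - l $ j"] by simp
    also have "\<dots> = (\<Prod>b\<in>Basis. (u - l) \<bullet> b)"
      by (simp add: prod_Basis_cart inner_axis)
    finally show "emeasure (distr lborel borel (reidx h)) (box l u) = (\<Prod>b\<in>Basis. (u - l) \<bullet> b)" .
  qed simp
  then show ?thesis by simp
qed

lemma reidx_linear: "linear (reidx h)" by (auto simp: linear_iff vec_eq_iff)

lemma reidx_comp: "bij h \<Longrightarrow> reidx h (reidx (inv h) x) = x" "bij h \<Longrightarrow> reidx (inv h) (reidx h y) = y"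
  by (auto simp: vec_eq_iff bij_is_surj surj_f_inv_f bij_is_inj inv_f_f)

lemma reidx_inner: assumes "bij h" shows "reidx h x \<bullet> reidx h y = x \<bullet> y"
proof -
  have "reidx h x \<bullet> reidx h y = (\<Sum>j\<in>UNIV. x $ h j * y $ h j)" by (simp add: inner_vec_def)
  also have "\<dots> = (\<Sum>i\<in>UNIV. x $ i * y $ i)"
    using sum.reindex_bij_betw[OF assms, of "\<lambda>i. x $ i * y $ i"] by simp
  finally show ?thesis by (simp add: inner_vec_def)
qed

lemma linear_measurable_cart[measurable]: "linear (f :: real^'n \<Rightarrow> real^'m) \<Longrightarrow> f \<in> borel_measurable borel"
  by (intro borel_measurable_continuous_onI linear_continuous_on) (simp add: linear_conv_bounded_linear)

lemma invol_vimage: assumes "\<And>x. R (R x) = x" shows "R -` A = R ` A"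
proof
  show "R -` A \<subseteq> R ` A"
  proof
    fix x assume "x \<in> R -` A"
    then have "R x \<in> A" by simp
    then show "x \<in> R ` A" using assms[of x] by (metis imageI)
  qed
  show "R ` A \<subseteq> R -` A" using assms by auto
qed

lemma lborel_orth_wo:
  fixes R :: "real^'m::{finite,wellorder} \<Rightarrow> real^'m::{finite,wellorder}"
  assumes lin: "linear R" and inn: "\<And>x y. R x \<bullet> R y = x \<bullet> y" and inv: "\<And>x. R (R x) = x"
  shows "distr lborel borel R = lborel"
proof -
  have orth: "orthogonal_transformation R" using lin inn by (simp add: orthogonal_transformation_def)
  have Rm: "R \<in> borel_measurable borel" using lin by (rule linear_measurable_cart)
  have "lborel = distr lborel borel R"
  proof (rule lborel_eqI)
    fix l u :: "(real, 'm) vec"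
    assume le: "\<And>b. b \<in> Basis \<Longrightarrow> l \<bullet> b \<le> u \<bullet> b"
    have pre: "R -` box l u = R ` box l u" using inv by (rule invol_vimage)
    have bR: "R -` box l u \<in> sets borel" using measurable_sets_borel[OF Rm, of "box l u"] by simp
    have bnd: "bounded (R ` box l u)"
      using bounded_linear_image[OF bounded_box] lin by (simp add: linear_conv_bounded_linear)
    have "emeasure (distr lborel borel R) (box l u) = emeasure lborel (R -` box l u)"
      using Rm by (subst emeasure_distr) auto
    also have "\<dots> = ennreal (measure lborel (R ` box l u))"
      unfolding pre using bnd by (intro emeasure_eq_ennreal_measure) (auto dest: emeasure_bounded_finite)
    also have "measure lborel (R ` box l u) = measure lebesgue (R ` box l u)"
      using bR pre by simp
    also have "\<dots> = measure lebesgue (box l u)"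
      by (rule measure_orthogonal_image[OF orth lmeasurable_box])
    also have "\<dots> = measure lborel (box l u)" by simp
    also have "ennreal \<dots> = emeasure lborel (box l u)"
      using emeasure_bounded_finite[OF bounded_box[of l u]]
      by (intro emeasure_eq_ennreal_measure[symmetric]) auto
    also have "\<dots> = (\<Prod>b\<in>Basis. (u - l) \<bullet> b)" using le by (rule emeasure_lborel_box)
    finally show "emeasure (distr lborel borel R) (box l u) = (\<Prod>b\<in>Basis. (u - l) \<bullet> b)" .
  qed simp
  then show ?thesis by simp
qed

lemma lborel_orth:
  fixes R :: "real^'n \<Rightarrow> real^'n"
  assumes lin: "linear R" and inn: "\<And>x y. R x \<bullet> R y = x \<bullet> y" and inv: "\<And>x. R (R x) = x"
  shows "distr lborel borel R = lborel"
proof -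
  obtain h :: "'n wo \<Rightarrow> 'n" where h: "bij h"
    using finite_same_card_bij[of "UNIV :: 'n wo set" "UNIV :: 'n set"] card_wo[where 'a='n] by auto
  define \<Phi> where "\<Phi> = (reidx h :: real^'n \<Rightarrow> real^'n wo)"
  define \<Psi> where "\<Psi> = (reidx (inv h) :: real^'n wo \<Rightarrow> real^'n)"
  have hi: "bij (inv h)" using h by (simp add: bij_imp_bij_inv)
  have PP: "\<Phi> (\<Psi> y) = y" "\<Psi> (\<Phi> x) = x" for x y using reidx_comp[OF h] by (auto simp: \<Phi>_def \<Psi>_def)
  define R' where "R' = \<Phi> \<circ> R \<circ> \<Psi>"
  have linR': "linear R'" unfolding R'_def \<Phi>_def \<Psi>_def
    by (intro linear_compose reidx_linear lin)
  have innR': "R' x \<bullet> R' y = x \<bullet> y" for x y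
    unfolding R'_def using reidx_inner[OF h] reidx_inner[OF hi] inn by (simp add: \<Phi>_def \<Psi>_def)
  have invR': "R' (R' x) = x" for x unfolding R'_def by (simp add: PP inv)
  have d1: "distr lborel borel \<Phi> = lborel" unfolding \<Phi>_def by (rule lborel_reidx[OF h])
  have d2: "distr lborel borel \<Psi> = lborel" unfolding \<Psi>_def by (rule lborel_reidx[OF hi])
  have d3: "distr lborel borel R' = lborel" by (rule lborel_orth_wo[OF linR' innR' invR'])
  have m\<Psi>[measurable]: "\<Psi> \<in> borel_measurable borel" unfolding \<Psi>_def by (rule reidx_measurable)
  have mR[measurable]: "R \<in> borel_measurable borel" using lin by (rule linear_measurable_cart)
  have mR'[measurable]: "R' \<in> borel_measurable borel" using linR' by (rule linear_measurable_cart)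
  have "distr lborel borel R = distr (distr lborel borel \<Psi>) borel R" by (simp add: d2)
  also have "\<dots> = distr lborel borel (R \<circ> \<Psi>)" by (subst distr_distr) auto
  also have "R \<circ> \<Psi> = \<Psi> \<circ> R'" by (auto simp: R'_def PP)
  also have "distr lborel borel (\<Psi> \<circ> R') = distr (distr lborel borel R') borel \<Psi>"
    by (subst distr_distr) auto
  also have "\<dots> = lborel" by (simp add: d3 d2)
  finally show ?thesis .
qed

definition hrefl :: "real^'n \<Rightarrow> real^'n \<Rightarrow> real^'n" where
  "hrefl u y = y - (2 * (u \<bullet> y) / (u \<bullet> u)) *\<^sub>R u"

lemma hrefl_linear: "linear (hrefl u)"
  unfolding linear_iff hrefl_def
  by (auto simp: add_divide_distrib scaleR_add_left algebra_simps)

lemma hrefl_inner: "hrefl u x \<bullet> hrefl u y = x \<bullet> y"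
proof (cases "u = 0")
  case True then show ?thesis by (simp add: hrefl_def)
next
  case False
  then have uu: "u \<bullet> u \<noteq> 0" by simp
  have "hrefl u x \<bullet> hrefl u y = x \<bullet> y - 2 * (u \<bullet> x) * (u \<bullet> y) / (u \<bullet> u) - 2 * (u \<bullet> y) * (u \<bullet> x) / (u \<bullet> u)
     + 4 * (u \<bullet> x) * (u \<bullet> y) * (u \<bullet> u) / ((u \<bullet> u) * (u \<bullet> u))"
    by (simp add: hrefl_def inner_diff_left inner_diff_right inner_commute algebra_simps)
  also have "\<dots> = x \<bullet> y" using uu by (simp add: field_simps)
  finally show ?thesis .
qed

lemma hrefl_sym: "hrefl u x \<bullet> y = x \<bullet> hrefl u y"
  by (simp add: hrefl_def inner_diff_left inner_diff_right inner_commute algebra_simps)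

lemma hrefl_hrefl: "hrefl u (hrefl u x) = x"
proof (cases "u = 0")
  case True then show ?thesis by (simp add: hrefl_def)
next
  case False
  then have uu: "u \<bullet> u \<noteq> 0" by simp
  have "hrefl u (hrefl u x) = x - (2 * (u \<bullet> x) / (u \<bullet> u) + 2 * (u \<bullet> x - 2 * (u \<bullet> x) / (u \<bullet> u) * (u \<bullet> u)) / (u \<bullet> u)) *\<^sub>R u"
    by (simp add: hrefl_def inner_diff_right algebra_simps)
  also have "2 * (u \<bullet> x) / (u \<bullet> u) + 2 * (u \<bullet> x - 2 * (u \<bullet> x) / (u \<bullet> u) * (u \<bullet> u)) / (u \<bullet> u) = 0"
    using uu by (simp add: field_simps)
  finally show ?thesis by simp
qed

lemma hrefl_swap: assumes "norm x = norm x'" shows "hrefl (x - x') x = x'"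
proof (cases "x = x'")
  case True then show ?thesis by (simp add: hrefl_def)
next
  case False
  have nx: "x \<bullet> x = x' \<bullet> x'" using assms by (metis norm_eq)
  have uu: "(x - x') \<bullet> (x - x') = 2 * ((x - x') \<bullet> x)"
    using nx by (simp add: inner_diff_left inner_diff_right inner_commute algebra_simps)
  have ne: "(x - x') \<bullet> (x - x') \<noteq> 0" using False by simp
  then have ne2: "(x - x') \<bullet> x \<noteq> 0" using uu by auto
  have eq: "2 * ((x - x') \<bullet> x) / ((x - x') \<bullet> (x - x')) = 1" using ne2 by (simp only: uu) simp
  show ?thesis by (simp only: hrefl_def eq) simp
qed

definition sph_proj :: "real^'n \<Rightarrow> real^'n" where "sph_proj x = x /\<^sub>R norm x"

lemma sph_proj_measurable[measurable]: "sph_proj \<in> borel_measurable borel"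
  unfolding sph_proj_def by measurable

abbreviation Uball :: "(real^'n) measure" where "Uball \<equiv> uniform_measure lborel (ball 0 1)"

lemma sigma_sphere_eq: "sigma_sphere = distr Uball borel sph_proj"
  unfolding sigma_sphere_def sph_proj_def[abs_def] by simp

lemma Uball_orth:
  fixes R :: "real^'n \<Rightarrow> real^'n"
  assumes lin: "linear R" and inn: "\<And>x y. R x \<bullet> R y = x \<bullet> y" and inv: "\<And>x. R (R x) = x"
  shows "distr Uball borel R = Uball"
proof (rule measure_eqI)
  have Rm[measurable]: "R \<in> borel_measurable borel" using lin by (rule linear_measurable_cart)
  show "sets (distr Uball borel R) = sets Uball" by simp
  fix A assume "A \<in> sets (distr Uball borel R)"
  then have A[measurable]: "A \<in> sets borel" by simp
  have nR: "norm (R x) = norm x" for x using inn[of x x] by (simp add: norm_eq_sqrt_inner)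
  have vb: "R -` ball 0 1 = ball 0 1" using nR by auto
  have RA: "R -` A \<in> sets borel" using measurable_sets_borel[OF Rm A] by simp
  have mU: "measurable Uball borel = measurable borel borel" by (rule measurable_cong_sets) auto
  have Rm': "R \<in> measurable Uball borel" using Rm by (simp only: mU)
  have "emeasure (distr Uball borel R) A = emeasure Uball (R -` A \<inter> space Uball)"
    by (rule emeasure_distr[OF Rm' A])
  also have "R -` A \<inter> space Uball = R -` A" by simp
  also have "emeasure Uball (R -` A) = emeasure lborel (ball 0 1 \<inter> R -` A) / emeasure lborel (ball 0 1 :: (real^'n) set)"
    using emeasure_uniform_measure[of "ball 0 1" lborel "R -` A"] RA by simp
  also have "ball 0 1 \<inter> R -` A = R -` (ball 0 1 \<inter> A)" using vb by auto
  also have "emeasure lborel (R -` (ball 0 1 \<inter> A)) = emeasure (distr lborel borel R) (ball 0 1 \<inter> A)"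
    by (subst emeasure_distr) auto
  also have "\<dots> = emeasure lborel (ball 0 1 \<inter> A)" by (simp add: lborel_orth[OF lin inn inv])
  also have "emeasure lborel (ball 0 1 \<inter> A) / emeasure lborel (ball 0 1 :: (real^'n) set) = emeasure Uball A"
    by (subst emeasure_uniform_measure) auto
  finally show "emeasure (distr Uball borel R) A = emeasure Uball A" .
qed

lemma sigma_orth:
  fixes R :: "real^'n \<Rightarrow> real^'n"
  assumes lin: "linear R" and inn: "\<And>x y. R x \<bullet> R y = x \<bullet> y" and inv: "\<And>x. R (R x) = x"
  shows "distr sigma_sphere borel R = sigma_sphere"
proof -
  have Rm[measurable]: "R \<in> borel_measurable borel" using lin by (rule linear_measurable_cart)
  have nR: "norm (R x) = norm x" for x using inn[of x x] by (simp add: norm_eq_sqrt_inner)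
  have comm: "R \<circ> sph_proj = sph_proj \<circ> R"
    using nR by (auto simp: sph_proj_def linear_scale[OF lin])
  have mU: "measurable Uball borel = measurable borel borel" by (rule measurable_cong_sets) auto
  have Rm': "R \<in> measurable Uball borel" using Rm by (simp only: mU)
  have Pm': "sph_proj \<in> measurable Uball borel" by (simp only: mU) measurable
  have "distr sigma_sphere borel R = distr (distr Uball borel sph_proj) borel R"
    by (simp add: sigma_sphere_eq)
  also have "\<dots> = distr Uball borel (R \<circ> sph_proj)"
    by (rule distr_distr[OF Rm Pm'])
  also have "\<dots> = distr Uball borel (sph_proj \<circ> R)" by (simp add: comm)
  also have "\<dots> = distr (distr Uball borel R) borel sph_proj"
    by (rule distr_distr[OF _ Rm', symmetric]) measurable
  also have "\<dots> = sigma_sphere" by (simp add: Uball_orth[OF lin inn inv] sigma_sphere_eq)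
  finally show ?thesis .
qed

lemma ball_pos: "emeasure lborel (ball (0::real^'n) 1) \<noteq> 0"
proof
  assume "emeasure lborel (ball (0::real^'n) 1) = 0"
  then have "measure lborel (ball (0::real^'n) 1) = 0" by (simp add: measure_def)
  with content_ball_pos[of 1 "0::real^'n"] show False by simp
qed

lemma ball_fin: "emeasure lborel (ball (0::real^'n) 1) \<noteq> \<infinity>"
  using emeasure_lborel_ball_finite[of "0::real^'n" 1] by simp

lemma prob_Uball: "prob_space (Uball :: (real^'n) measure)"
  by (rule prob_space_uniform_measure[OF ball_pos ball_fin])

lemma meas_borel_cong: "sets M = sets borel \<Longrightarrow> measurable M N = measurable borel N"
  by (rule measurable_cong_sets) auto

lemma sigma_sphere_prob: "sphere_prob (sigma_sphere :: (real^'n) measure)"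
proof -
  interpret U: prob_space "Uball :: (real^'n) measure" by (rule prob_Uball)
  have mU: "measurable (Uball :: (real^'n) measure) borel = measurable borel borel"
    by (rule meas_borel_cong) simp
  have Pm: "sph_proj \<in> measurable (Uball :: (real^'n) measure) borel" by (simp only: mU) measurable
  have ps: "prob_space (sigma_sphere :: (real^'n) measure)"
    unfolding sigma_sphere_eq by (rule U.prob_space_distr[OF Pm])
  have pre: "sph_proj -` sphere 0 1 \<inter> space Uball = UNIV - {0::real^'n}"
    by (auto simp: sph_proj_def norm_divide)
  have "emeasure (distr (Uball :: (real^'n) measure) borel sph_proj) (sphere 0 1) = emeasure (Uball :: (real^'n) measure) (sph_proj -` sphere (0::real^'n) 1 \<inter> space Uball)"
    by (rule emeasure_distr[OF Pm]) simp
  then have "emeasure (sigma_sphere :: (real^'n) measure) (sphere 0 1) = emeasure Uball (UNIV - {0::real^'n})"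
    unfolding sigma_sphere_eq pre .
  also have "\<dots> = emeasure Uball (UNIV :: (real^'n) set) - emeasure Uball {0::real^'n}"
    by (rule emeasure_Diff) auto
  also have "emeasure Uball {0::real^'n} = 0"
    by (subst emeasure_uniform_measure) auto
  also have "emeasure Uball (UNIV :: (real^'n) set) = 1"
    using U.emeasure_space_1 by simp
  finally have "emeasure (sigma_sphere :: (real^'n) measure) (sphere 0 1) = 1" by simp
  moreover have "sets (sigma_sphere :: (real^'n) measure) = sets borel" by (simp add: sigma_sphere_eq)
  ultimately show ?thesis using ps unfolding sphere_prob_def by blast
qed

lemma sigma_rot:
  fixes x x' :: "real^'n" and g :: "real \<Rightarrow> real"
  assumes "norm x = 1" "norm x' = 1" and g[measurable]: "g \<in> borel_measurable borel"
  shows "(\<integral>y. g (x \<bullet> y) \<partial>sigma_sphere) = (\<integral>y. g (x' \<bullet> y) \<partial>sigma_sphere)"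
proof -
  define R where "R = hrefl (x - x')"
  have lin: "linear R" by (simp add: R_def hrefl_linear)
  have inn: "R a \<bullet> R b = a \<bullet> b" for a b by (simp add: R_def hrefl_inner)
  have inv: "R (R a) = a" for a by (simp add: R_def hrefl_hrefl)
  have Rx: "R x = x'" using assms by (simp add: R_def hrefl_swap)
  have Rm[measurable]: "R \<in> borel_measurable borel" using lin by (rule linear_measurable_cart)
  have mS: "measurable (sigma_sphere :: (real^'n) measure) borel = measurable borel borel"
    by (rule meas_borel_cong) (simp add: sigma_sphere_eq)
  have Rm': "R \<in> measurable sigma_sphere borel" by (simp only: mS) (rule Rm)
  have xy: "x' \<bullet> y = x \<bullet> R y" for y
    unfolding Rx[symmetric] by (simp only: R_def hrefl_sym)
  have "(\<integral>y. g (x' \<bullet> y) \<partial>sigma_sphere) = (\<integral>y. g (x \<bullet> R y) \<partial>sigma_sphere)"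
    by (simp only: xy)
  also have "\<dots> = (\<integral>y. g (x \<bullet> y) \<partial>distr sigma_sphere borel R)"
    by (rule integral_distr[OF Rm', symmetric]) measurable
  also have "\<dots> = (\<integral>y. g (x \<bullet> y) \<partial>sigma_sphere)" by (simp add: sigma_orth[OF lin inn inv])
  finally show ?thesis by simp
qed

lemma sp_basic:
  assumes "sphere_prob (M :: (real^'n) measure)"
  shows "prob_space M" "sets M = sets borel" "AE x in M. norm x = 1"
proof -
  show P: "prob_space M" and S: "sets M = sets borel" using assms by (auto simp: sphere_prob_def)
  interpret prob_space M by (rule P)
  have sph: "sphere (0::real^'n) 1 \<in> sets M" using S by simp
  have "emeasure M (space M - sphere 0 1) = emeasure M (space M) - emeasure M (sphere 0 1)"
    using sph by (intro emeasure_compl) auto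
  also have "\<dots> = 0" using assms emeasure_space_1 by (simp add: sphere_prob_def)
  finally have "space M - sphere 0 1 \<in> null_sets M" using sph by (auto intro: null_setsI)
  then show "AE x in M. norm x = 1" by (rule AE_I') auto
qed

lemma sp_meas: "sphere_prob M \<Longrightarrow> f \<in> borel_measurable borel \<Longrightarrow> f \<in> borel_measurable M"
  using sp_basic(2) meas_borel_cong by metis

lemma sp_integrable:
  fixes f :: "real^'n \<Rightarrow> real"
  assumes M: "sphere_prob M" and f: "f \<in> borel_measurable borel" and b: "\<And>x. norm x = 1 \<Longrightarrow> \<bar>f x\<bar> \<le> B"
  shows "integrable M f"
proof -
  interpret prob_space M using sp_basic[OF M] by simp
  show ?thesis
    by (rule integrable_const_bound[where B=B]) (use sp_basic(3)[OF M] b sp_meas[OF M f] in auto)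
qed

lemma sp_integral_bound:
  fixes f :: "real^'n \<Rightarrow> real"
  assumes M: "sphere_prob M" and b: "\<And>x. norm x = 1 \<Longrightarrow> \<bar>f x\<bar> \<le> B"
  shows "\<bar>integral\<^sup>L M f\<bar> \<le> B"
proof (cases "integrable M f")
  case True
  interpret prob_space M using sp_basic[OF M] by simp
  have "\<bar>integral\<^sup>L M f\<bar> \<le> (\<integral>x. \<bar>f x\<bar> \<partial>M)" using integral_norm_bound[of M f] by simp
  also have "\<dots> \<le> (\<integral>x. B \<partial>M)"
    by (rule integral_mono_AE) (use True sp_basic(3)[OF M] b in auto)
  also have "\<dots> = B" by (simp add: prob_space)
  finally show ?thesis .
next
  case False
  have "\<bar>f x\<bar> \<le> B" if "norm x = 1" for x :: "real^'n" using b that by simp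
  moreover have "norm (axis undefined (1::real) :: real^'n) = 1" by simp
  ultimately have "0 \<le> B" by (meson abs_ge_zero order_trans)
  then show ?thesis using False by (simp add: not_integrable_integral_eq)
qed

definition kb :: "(real^'n \<Rightarrow> real^'n \<Rightarrow> real) \<Rightarrow> real \<Rightarrow> bool" where
  "kb g B \<longleftrightarrow> case_prod g \<in> borel_measurable (borel \<Otimes>\<^sub>M borel) \<and>
     (\<forall>x y. norm x = 1 \<longrightarrow> norm y = 1 \<longrightarrow> \<bar>g x y\<bar> \<le> B)"

definition DI :: "(real^'n) measure \<Rightarrow> (real^'n) measure \<Rightarrow> (real^'n \<Rightarrow> real^'n \<Rightarrow> real) \<Rightarrow> real" where
  "DI M N g = (\<integral>x. (\<integral>y. g x y \<partial>N) \<partial>M)"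

lemma kb_slice: "kb g B \<Longrightarrow> g x \<in> borel_measurable borel"
  unfolding kb_def using measurable_Pair2[of "case_prod g" borel borel borel x] by simp

lemma kb_outer_meas:
  assumes N: "sphere_prob N" and g: "kb g B"
  shows "(\<lambda>x. \<integral>y. g x y \<partial>N) \<in> borel_measurable borel"
proof -
  interpret N: prob_space N using sp_basic[OF N] by simp
  have "sets (borel \<Otimes>\<^sub>M N) = sets (borel \<Otimes>\<^sub>M borel)"
    using sp_basic(2)[OF N] by (intro sets_pair_measure_cong) auto
  then have eq: "measurable (borel \<Otimes>\<^sub>M N) borel = measurable (borel \<Otimes>\<^sub>M borel) borel"
    by (rule measurable_cong_sets) simp
  have "case_prod g \<in> borel_measurable (borel \<Otimes>\<^sub>M N)"
    using g unfolding kb_def eq by simp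
  then show ?thesis by (rule N.borel_measurable_lebesgue_integral)
qed

lemma kb_inner_int:
  assumes N: "sphere_prob N" and g: "kb g B" and x: "norm x = 1"
  shows "integrable N (g x)"
  by (rule sp_integrable[OF N kb_slice[OF g]]) (use g x in \<open>auto simp: kb_def\<close>)

lemma kb_inner_bound:
  assumes N: "sphere_prob N" and g: "kb g B" and x: "norm x = 1"
  shows "\<bar>\<integral>y. g x y \<partial>N\<bar> \<le> B"
  by (rule sp_integral_bound[OF N]) (use g x in \<open>auto simp: kb_def\<close>)

lemma kb_outer_int:
  assumes M: "sphere_prob M" and N: "sphere_prob N" and g: "kb g B"
  shows "integrable M (\<lambda>x. \<integral>y. g x y \<partial>N)"
  by (rule sp_integrable[OF M kb_outer_meas[OF N g]]) (rule kb_inner_bound[OF N g])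

lemma DI_bound:
  assumes M: "sphere_prob M" and N: "sphere_prob N" and g: "kb g B"
  shows "\<bar>DI M N g\<bar> \<le> B"
  unfolding DI_def by (rule sp_integral_bound[OF M]) (rule kb_inner_bound[OF N g])

lemma DI_cong:
  assumes M: "sphere_prob M" and N: "sphere_prob N" and g: "kb g B" and h: "kb h B'"
    and eq: "\<And>x y. norm x = 1 \<Longrightarrow> norm y = 1 \<Longrightarrow> g x y = h x y"
  shows "DI M N g = DI M N h"
proof -
  have inner: "(\<integral>y. g x y \<partial>N) = (\<integral>y. h x y \<partial>N)" if x: "norm x = 1" for x
    by (rule integral_cong_AE) (use sp_meas[OF N kb_slice[OF g]] sp_meas[OF N kb_slice[OF h]]
        sp_basic(3)[OF N] eq x in auto)
  show ?thesis unfolding DI_def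
    by (rule integral_cong_AE) (use sp_meas[OF M kb_outer_meas[OF N g]] sp_meas[OF M kb_outer_meas[OF N h]]
        sp_basic(3)[OF M] inner in auto)
qed

lemma DI_mono:
  assumes M: "sphere_prob M" and N: "sphere_prob N" and g: "kb g B" and h: "kb h B'"
    and le: "\<And>x y. norm x = 1 \<Longrightarrow> norm y = 1 \<Longrightarrow> g x y \<le> h x y"
  shows "DI M N g \<le> DI M N h"
proof -
  have inner: "(\<integral>y. g x y \<partial>N) \<le> (\<integral>y. h x y \<partial>N)" if x: "norm x = 1" for x
    by (rule integral_mono_AE) (use kb_inner_int[OF N g x] kb_inner_int[OF N h x]
        sp_basic(3)[OF N] le x in auto)
  show ?thesis unfolding DI_def
    by (rule integral_mono_AE) (use kb_outer_int[OF M N g] kb_outer_int[OF M N h]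
        sp_basic(3)[OF M] inner in auto)
qed

lemma kb_sum:
  fixes g :: "'k \<Rightarrow> real^'n \<Rightarrow> real^'n \<Rightarrow> real"
  assumes g: "\<And>k. k \<in> K \<Longrightarrow> kb (g k) (B k)"
  shows "kb (\<lambda>x y. \<Sum>k\<in>K. g k x y) (\<Sum>k\<in>K. B k)"
  unfolding kb_def
proof safe
  have "(\<lambda>z. \<Sum>k\<in>K. case_prod (g k) z) \<in> borel_measurable (borel \<Otimes>\<^sub>M borel)"
    using g by (intro borel_measurable_sum) (auto simp: kb_def)
  then show "(\<lambda>(x, y). \<Sum>k\<in>K. g k x y) \<in> borel_measurable (borel \<Otimes>\<^sub>M borel)"
    by (simp add: case_prod_beta')
  fix x y :: "real^'n" assume "norm x = 1" "norm y = 1"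
  then have b: "\<bar>g k x y\<bar> \<le> B k" if "k \<in> K" for k using g[OF that] by (auto simp: kb_def)
  have "\<bar>\<Sum>k\<in>K. g k x y\<bar> \<le> (\<Sum>k\<in>K. \<bar>g k x y\<bar>)" by (rule sum_abs)
  also have "\<dots> \<le> (\<Sum>k\<in>K. B k)" by (rule sum_mono) (rule b)
  finally show "\<bar>\<Sum>k\<in>K. g k x y\<bar> \<le> (\<Sum>k\<in>K. B k)" .
qed

lemma DI_sum:
  fixes g :: "'k \<Rightarrow> real^'n \<Rightarrow> real^'n \<Rightarrow> real"
  assumes M: "sphere_prob M" and N: "sphere_prob N" and g: "\<And>k. k \<in> K \<Longrightarrow> kb (g k) (B k)"
  shows "DI M N (\<lambda>x y. \<Sum>k\<in>K. g k x y) = (\<Sum>k\<in>K. DI M N (g k))"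
proof -
  have inner: "(\<integral>y. (\<Sum>k\<in>K. g k x y) \<partial>N) = (\<Sum>k\<in>K. \<integral>y. g k x y \<partial>N)" if x: "norm x = 1" for x
    using kb_inner_int[OF N g x] by (intro Bochner_Integration.integral_sum) auto
  have "DI M N (\<lambda>x y. \<Sum>k\<in>K. g k x y) = (\<integral>x. (\<Sum>k\<in>K. \<integral>y. g k x y \<partial>N) \<partial>M)"
    unfolding DI_def
    by (rule integral_cong_AE) (use sp_meas[OF M kb_outer_meas[OF N kb_sum[OF g]]]
        sp_meas[OF M kb_outer_meas[OF N g]] sp_basic(3)[OF M] inner in auto)
  also have "\<dots> = (\<Sum>k\<in>K. DI M N (g k))"
    unfolding DI_def by (rule Bochner_Integration.integral_sum) (use kb_outer_int[OF M N g] in auto)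
  finally show ?thesis .
qed

lemma DI_cmult: "DI M N (\<lambda>x y. c * g x y) = c * DI M N g"
  unfolding DI_def by simp

lemma DI_sep: "DI M N (\<lambda>x y. f x * h y) = integral\<^sup>L M f * integral\<^sup>L N h"
  unfolding DI_def by simp

lemma DI_const: assumes "sphere_prob M" "sphere_prob N" shows "DI M N (\<lambda>x y. c) = c"
proof -
  interpret M: prob_space M using sp_basic assms by blast
  interpret N: prob_space N using sp_basic assms by blast
  show ?thesis unfolding DI_def by (simp add: M.prob_space N.prob_space)
qed

lemma DI_lim:
  assumes M: "sphere_prob M" and N: "sphere_prob N" and g: "\<And>n. kb (g n) B" and h: "kb h B'"
    and lim: "\<And>x y. norm x = 1 \<Longrightarrow> norm y = 1 \<Longrightarrow> (\<lambda>n. g n x y) \<longlonglongrightarrow> h x y"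
  shows "(\<lambda>n. DI M N (g n)) \<longlonglongrightarrow> DI M N h"
proof -
  interpret M: prob_space M using sp_basic M by blast
  interpret N: prob_space N using sp_basic N by blast
  have inner: "(\<lambda>n. \<integral>y. g n x y \<partial>N) \<longlonglongrightarrow> (\<integral>y. h x y \<partial>N)" if x: "norm x = 1" for x
  proof (rule integral_dominated_convergence[where w="\<lambda>_. B"])
    show "h x \<in> borel_measurable N" by (rule sp_meas[OF N kb_slice[OF h]])
    show "g n x \<in> borel_measurable N" for n by (rule sp_meas[OF N kb_slice[OF g]])
    show "integrable N (\<lambda>_. B)" by simp
    show "AE y in N. (\<lambda>n. g n x y) \<longlonglongrightarrow> h x y" using sp_basic(3)[OF N] lim x by auto
    show "AE y in N. norm (g n x y) \<le> B" for n using sp_basic(3)[OF N] g[of n] x by (auto simp: kb_def)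
  qed
  show ?thesis unfolding DI_def
  proof (rule integral_dominated_convergence[where w="\<lambda>_. B"])
    show "(\<lambda>x. \<integral>y. h x y \<partial>N) \<in> borel_measurable M" by (rule sp_meas[OF M kb_outer_meas[OF N h]])
    show "(\<lambda>x. \<integral>y. g n x y \<partial>N) \<in> borel_measurable M" for n by (rule sp_meas[OF M kb_outer_meas[OF N g]])
    show "integrable M (\<lambda>_. B)" by simp
    show "AE x in M. (\<lambda>n. \<integral>y. g n x y \<partial>N) \<longlonglongrightarrow> (\<integral>y. h x y \<partial>N)" using sp_basic(3)[OF M] inner by auto
    show "AE x in M. norm (\<integral>y. g n x y \<partial>N) \<le> B" for n
      using sp_basic(3)[OF M] kb_inner_bound[OF N g] by auto
  qed
qed

lemma DI_zero:
  assumes M: "sphere_prob M" and g: "kb g B"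
    and nn: "\<And>x y. norm x = 1 \<Longrightarrow> norm y = 1 \<Longrightarrow> 0 \<le> g x y" and z: "DI M M g = 0"
  shows "AE x in M. norm x = 1 \<and> (AE y in M. g x y = 0)"
proof -
  have innn: "0 \<le> (\<integral>y. g x y \<partial>M)" if x: "norm x = 1" for x
    by (rule integral_nonneg_AE) (use sp_basic(3)[OF M] nn x in auto)
  have "AE x in M. (\<integral>y. g x y \<partial>M) = 0"
    using z unfolding DI_def
    by (subst (asm) integral_nonneg_eq_0_iff_AE) (use kb_outer_int[OF M M g] sp_basic(3)[OF M] innn in auto)
  moreover have "AE y in M. g x y = 0" if x: "norm x = 1" and i0: "(\<integral>y. g x y \<partial>M) = 0" for x
    using i0 by (subst (asm) integral_nonneg_eq_0_iff_AE) (use kb_inner_int[OF M g x] sp_basic(3)[OF M] nn x in auto)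
  ultimately show ?thesis using sp_basic(3)[OF M] by auto
qed

definition ca :: "real \<Rightarrow> nat \<Rightarrow> real" where "ca a k = (a gchoose k) * (-1)^k"
definition FN :: "real \<Rightarrow> nat \<Rightarrow> real \<Rightarrow> real" where "FN a N u = (\<Sum>k\<le>N. ca a k * u^k)"

lemma ca0[simp]: "ca a 0 = 1" by (simp add: ca_def)

lemma sign_prod1':
  assumes "0 < a" "a < 1"
  shows "(-1)^Suc m * (\<Prod>i = 0..<Suc m. a - of_nat i) \<le> (0::real)"
proof (induction m)
  case 0 then show ?case using assms by simp
next
  case (Suc m)
  have "(-1)^Suc (Suc m) * (\<Prod>i = 0..<Suc (Suc m). a - of_nat i) = ((-1)^Suc m * (\<Prod>i = 0..<Suc m. a - of_nat i)) * (of_nat (Suc m) - a)"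
    by (simp add: algebra_simps)
  also have "\<dots> \<le> 0" by (rule mult_nonpos_nonneg[OF Suc.IH]) (use assms in simp)
  finally show ?case .
qed

lemma sign_prod1:
  assumes "0 < a" "a < 1" "1 \<le> k"
  shows "(-1)^k * (\<Prod>i = 0..<k. a - of_nat i) \<le> (0::real)"
  using sign_prod1'[OF assms(1,2), of "k - 1"] assms(3) by simp

lemma ca_nonpos: assumes "0 < a" "a < 1" "1 \<le> k" shows "ca a k \<le> 0"
proof -
  have "ca a k = ((-1)^k * (\<Prod>i = 0..<k. a - of_nat i)) / fact k"
    unfolding ca_def using gbinomial_mult_fact'[of a k] by (simp add: field_simps)
  also have "\<dots> \<le> 0" using sign_prod1[OF assms] by (intro divide_nonpos_pos) auto
  finally show ?thesis .
qed

lemma sign_prod2: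
  assumes "0 < a" "a < 1"
  shows "(-1)^k * (\<Prod>i = 0..<k. (a - 1) - of_nat i) \<ge> (0::real)"
proof (induction k)
  case 0 then show ?case by simp
next
  case (Suc k)
  have "(-1)^Suc k * (\<Prod>i = 0..<Suc k. (a - 1) - of_nat i) = ((-1)^k * (\<Prod>i = 0..<k. (a - 1) - of_nat i)) * (of_nat k + 1 - a)"
    by (simp add: algebra_simps)
  also have "\<dots> \<ge> 0" by (rule mult_nonneg_nonneg[OF Suc.IH]) (use assms in simp)
  finally show ?case .
qed

lemma FN_one_nonneg: assumes "0 < a" "a < 1" shows "0 \<le> FN a N 1"
proof -
  have "FN a N 1 = (-1)^N * (a - 1 gchoose N)"
    unfolding FN_def ca_def using gbinomial_sum_lower_neg[of a N] by simp
  also have "\<dots> = ((-1)^N * (\<Prod>i = 0..<N. (a - 1) - of_nat i)) / fact N"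
    using gbinomial_mult_fact'[of "a - 1" N] by (simp add: field_simps)
  also have "\<dots> \<ge> 0" using sign_prod2[OF assms] by simp
  finally show ?thesis .
qed

lemma FN_Suc: "FN a (Suc N) u = FN a N u + ca a (Suc N) * u ^ Suc N"
  by (simp add: FN_def)

lemma FN_dec: assumes "0 < a" "a < 1" "0 \<le> u" shows "FN a (Suc N) u \<le> FN a N u"
  unfolding FN_Suc using ca_nonpos[OF assms(1,2), of "Suc N"] assms(3)
  by (simp add: mult_nonpos_nonneg)

lemma FN_decseq: assumes "0 < a" "a < 1" "0 \<le> u" shows "decseq (\<lambda>N. FN a N u)"
  using FN_dec[OF assms] by (simp add: decseq_SucI)

lemma FN_le1: assumes "0 < a" "a < 1" "0 \<le> u" shows "FN a N u \<le> 1"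
proof -
  have "FN a N u \<le> FN a 0 u" using FN_decseq[OF assms] by (simp add: decseq_def)
  then show ?thesis by (simp add: FN_def)
qed

lemma FN_sums: assumes "0 \<le> u" "u < 1" shows "(\<lambda>N. FN a N u) \<longlonglongrightarrow> (1 - u) powr a"
proof -
  have gb: "(\<lambda>k. (a gchoose k) * (-u)^k) sums (1 + (-u)) powr a"
    by (rule gen_binomial_real) (use assms in simp)
  have eq: "(\<lambda>k. (a gchoose k) * (-u)^k) = (\<lambda>k. ca a k * u^k)"
  proof
    fix k
    have "(-u)^k = (-1)^k * u^k" by (rule power_minus)
    then show "(a gchoose k) * (-u)^k = ca a k * u^k" unfolding ca_def by (simp only: mult_ac)
  qed
  have "1 + (-u) = 1 - u" by simp
  with gb eq have "(\<lambda>k. ca a k * u^k) sums (1 - u) powr a" by (simp only:)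
  then have "(\<lambda>N. \<Sum>k<Suc N. ca a k * u^k) \<longlonglongrightarrow> (1 - u) powr a"
    unfolding sums_def by (rule LIMSEQ_Suc)
  then show ?thesis unfolding FN_def lessThan_Suc_atMost .
qed

lemma FN_ge_lt1: assumes "0 < a" "a < 1" "0 \<le> u" "u < 1" shows "(1 - u) powr a \<le> FN a N u"
  by (rule decseq_ge[OF FN_decseq[OF assms(1-3)] FN_sums[OF assms(3,4)]])

lemma FN_mono_u: assumes "0 < a" "a < 1" "0 \<le> u" "u \<le> 1" shows "FN a N 1 \<le> FN a N u"
  unfolding FN_def
proof (rule sum_mono)
  fix k assume "k \<in> {..N}"
  show "ca a k * 1 ^ k \<le> ca a k * u ^ k"
  proof (cases "k = 0")
    case True then show ?thesis by simp
  next
    case False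
    then have "ca a k \<le> 0" using ca_nonpos[OF assms(1,2)] by simp
    moreover have "u ^ k \<le> 1" using assms by (simp add: power_le_one)
    ultimately show ?thesis using mult_left_mono_neg[of "u^k" 1 "ca a k"] by simp
  qed
qed

lemma FN_lim: assumes "0 < a" "a < 1" "0 \<le> u" "u \<le> 1" shows "(\<lambda>N. FN a N u) \<longlonglongrightarrow> (1 - u) powr a"
proof (cases "u < 1")
  case True then show ?thesis using FN_sums assms by simp
next
  case False
  then have u1: "u = 1" using assms by simp
  obtain L where L: "(\<lambda>N. FN a N 1) \<longlonglongrightarrow> L" "\<forall>i. L \<le> FN a i 1"
    using decseq_convergent[OF FN_decseq[OF assms(1,2)], of 1 0] FN_one_nonneg[OF assms(1,2)] by auto
  have L0: "0 \<le> L" using L(1) FN_one_nonneg[OF assms(1,2)] by (intro LIMSEQ_le_const) auto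
  have Lu: "L \<le> (1 - v) powr a" if "0 \<le> v" "v < 1" for v
    by (rule LIMSEQ_le[OF L(1) FN_sums[OF that]]) (use FN_mono_u[OF assms(1,2), of v] that in auto)
  have lim: "((\<lambda>v. (1 - v) powr a) \<longlongrightarrow> 0) (at_left (1::real))"
  proof (rule tendsto_zero_powrI)
    show "((\<lambda>v. 1 - v) \<longlongrightarrow> (0::real)) (at_left 1)"
      by (rule tendsto_eq_intros refl)+ simp
    show "((\<lambda>v. a) \<longlongrightarrow> a) (at_left 1)" by simp
    show "\<forall>\<^sub>F v in at_left 1. 0 \<le> 1 - (v::real)" by (auto simp: eventually_at_left_field intro!: exI[of _ 0])
  qed (use assms in simp)
  have "L \<le> 0"
  proof (rule tendsto_le[OF _ lim tendsto_const])
    show "at_left (1::real) \<noteq> bot" by simp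
    have "\<forall>\<^sub>F v in at_left (1::real). 0 < v \<and> v < 1"
      by (auto simp: eventually_at_left_field intro!: exI[of _ 0])
    then show "\<forall>\<^sub>F v in at_left (1::real). L \<le> (1 - v) powr a"
      by eventually_elim (use Lu in auto)
  qed
  then have "L = 0" using L0 by simp
  then show ?thesis using L(1) u1 by simp
qed

lemma FN_ge: assumes "0 < a" "a < 1" "0 \<le> u" "u \<le> 1" shows "(1 - u) powr a \<le> FN a N u"
proof (cases "u < 1")
  case True then show ?thesis using FN_ge_lt1 assms by simp
next
  case False
  then show ?thesis using assms FN_one_nonneg[OF assms(1,2), of N] by simp
qed

definition phi :: "'n list \<Rightarrow> real^'n \<Rightarrow> real" where "phi w x = prod_list (map (\<lambda>i. x $ i) w)"
definition Wl :: "nat \<Rightarrow> 'n list set" where "Wl m = {w. length w = m}"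

lemma phi_simps[simp]: "phi [] x = 1" "phi (i # w) x = x $ i * phi w x"
  by (simp_all add: phi_def)

lemma finite_Wl: "finite (Wl m :: ('n::finite) list set)"
  using finite_lists_length_eq[of "UNIV :: 'n set" m] by (simp add: Wl_def)

lemma Wl_Suc: "Wl (Suc m) = (\<lambda>(i, w). i # w) ` (UNIV \<times> Wl m)"
  by (auto simp: Wl_def length_Suc_conv image_iff)

lemma feature: fixes x y :: "real^'n" shows "(x \<bullet> y) ^ m = (\<Sum>w\<in>Wl m. phi w x * phi w y)"
proof (induction m)
  case 0
  have "Wl 0 = {[] :: 'n list}" by (auto simp: Wl_def)
  then show ?case by simp
next
  case (Suc m)
  have inj: "inj_on (\<lambda>(i, w). i # w) (UNIV \<times> Wl m)" by (auto simp: inj_on_def)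
  have "(x \<bullet> y) ^ Suc m = (\<Sum>i\<in>UNIV. x $ i * y $ i) * (\<Sum>w\<in>Wl m. phi w x * phi w y)"
    unfolding power_Suc Suc.IH by (simp only: inner_vec_def inner_real_def)
  also have "\<dots> = (\<Sum>i\<in>UNIV. \<Sum>w\<in>Wl m. (x $ i * y $ i) * (phi w x * phi w y))"
    by (rule sum_product)
  also have "\<dots> = (\<Sum>(i, w)\<in>UNIV \<times> Wl m. (x $ i * y $ i) * (phi w x * phi w y))"
    by (rule sum.cartesian_product)
  also have "\<dots> = (\<Sum>p\<in>UNIV \<times> Wl m. phi ((\<lambda>(i, w). i # w) p) x * phi ((\<lambda>(i, w). i # w) p) y)"
    by (rule sum.cong) (auto simp: algebra_simps)
  also have "\<dots> = (\<Sum>v\<in>(\<lambda>(i, w). i # w) ` (UNIV \<times> Wl m). phi v x * phi v y)"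
    using sum.reindex[OF inj, of "\<lambda>v. phi v x * phi v y"] by (simp add: comp_def)
  also have "\<dots> = (\<Sum>v\<in>Wl (Suc m). phi v x * phi v y)" by (simp only: Wl_Suc)
  finally show ?case .
qed

lemma phi_meas[measurable]: "phi w \<in> borel_measurable borel"
  by (induction w) (simp_all add: phi_def[symmetric])

lemma phi_bound: "norm x = 1 \<Longrightarrow> \<bar>phi w x\<bar> \<le> 1"
proof (induction w)
  case Nil then show ?case by simp
next
  case (Cons i w)
  have "\<bar>x $ i\<bar> \<le> 1" using component_le_norm_cart[of x i] Cons.prems by simp
  then show ?case using Cons by (simp add: abs_mult mult_le_one)
qed

lemma inner_unit_bound: "norm x = 1 \<Longrightarrow> norm y = 1 \<Longrightarrow> \<bar>x \<bullet> (y::real^'n)\<bar> \<le> 1"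
  using Cauchy_Schwarz_ineq2[of x y] by simp

lemma kb_pow: "kb (\<lambda>x y :: real^'n. (x \<bullet> y) ^ m) 1"
  unfolding kb_def
proof safe
  show "(\<lambda>(x, y). (x \<bullet> y) ^ m) \<in> borel_measurable (borel \<Otimes>\<^sub>M borel :: ((real^'n) \<times> (real^'n)) measure)" by measurable
  fix x y :: "real^'n" assume "norm x = 1" "norm y = 1"
  then have "\<bar>x \<bullet> y\<bar> \<le> 1" by (rule inner_unit_bound)
  then show "\<bar>(x \<bullet> y) ^ m\<bar> \<le> 1" by (simp add: power_abs power_le_one)
qed

lemma kb_phi: "kb (\<lambda>x y :: real^'n. phi w x * phi w y) 1"
  unfolding kb_def
proof safe
  show "(\<lambda>(x, y). phi w x * phi w y) \<in> borel_measurable (borel \<Otimes>\<^sub>M borel :: ((real^'n) \<times> (real^'n)) measure)" by measurable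
  fix x y :: "real^'n" assume "norm x = 1" "norm y = 1"
  then have "\<bar>phi w x\<bar> \<le> 1" "\<bar>phi w y\<bar> \<le> 1" using phi_bound by auto
  then show "\<bar>phi w x * phi w y\<bar> \<le> 1" unfolding abs_mult by (intro mult_le_one) auto
qed

lemma DI_pow_feature:
  assumes M: "sphere_prob M" and N: "sphere_prob N"
  shows "DI M N (\<lambda>x y. (x \<bullet> y) ^ m) = (\<Sum>w\<in>Wl m. integral\<^sup>L M (phi w) * integral\<^sup>L N (phi w))"
proof -
  have "DI M N (\<lambda>x y. (x \<bullet> y) ^ m) = DI M N (\<lambda>x y. \<Sum>w\<in>Wl m. phi w x * phi w y)"
    by (simp only: feature)
  also have "\<dots> = (\<Sum>w\<in>Wl m. DI M N (\<lambda>x y. phi w x * phi w y))"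
    by (rule DI_sum[OF M N kb_phi])
  finally show ?thesis by (simp add: DI_sep)
qed

lemma DI_inner_const:
  assumes M: "sphere_prob M" and N: "sphere_prob N" and g: "kb g B"
    and c: "\<And>x. norm x = 1 \<Longrightarrow> (\<integral>y. g x y \<partial>N) = C"
  shows "DI M N g = C"
proof -
  interpret M: prob_space M using sp_basic M by blast
  have "DI M N g = (\<integral>x. C \<partial>M)" unfolding DI_def
    by (rule integral_cong_AE) (use sp_meas[OF M kb_outer_meas[OF N g]] sp_basic(3)[OF M] c in auto)
  then show ?thesis by (simp add: M.prob_space)
qed

lemma pow_sigma_min:
  assumes M: "sphere_prob (M :: (real^'n) measure)"
  shows "DI (sigma_sphere :: (real^'n) measure) sigma_sphere (\<lambda>x y. (x \<bullet> y) ^ m) \<le> DI M M (\<lambda>x y. (x \<bullet> y) ^ m)"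
proof -
  note S = sigma_sphere_prob[where 'n='n]
  define e :: "real^'n" where "e = axis undefined 1"
  have e: "norm e = 1" by (simp add: e_def)
  define C where "C = (\<integral>y. (e \<bullet> y) ^ m \<partial>(sigma_sphere :: (real^'n) measure))"
  have c: "(\<integral>y. (x \<bullet> y) ^ m \<partial>sigma_sphere) = C" if "norm x = 1" for x :: "real^'n"
    unfolding C_def using sigma_rot[OF that e, of "\<lambda>t. t ^ m"] by simp
  have X: "DI M sigma_sphere (\<lambda>x y. (x \<bullet> y) ^ m) = C" by (rule DI_inner_const[OF M S kb_pow c])
  have Y: "DI (sigma_sphere :: (real^'n) measure) sigma_sphere (\<lambda>x y. (x \<bullet> y) ^ m) = C" by (rule DI_inner_const[OF S S kb_pow c])
  define a where "a w = integral\<^sup>L M (phi w)" for w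
  define b where "b w = integral\<^sup>L (sigma_sphere :: (real^'n) measure) (phi w)" for w
  have EM: "DI M M (\<lambda>x y. (x \<bullet> y) ^ m) = (\<Sum>w\<in>Wl m. a w * a w)" unfolding a_def by (rule DI_pow_feature[OF M M])
  have ES: "DI (sigma_sphere :: (real^'n) measure) sigma_sphere (\<lambda>x y. (x \<bullet> y) ^ m) = (\<Sum>w\<in>Wl m. b w * b w)"
    unfolding b_def by (rule DI_pow_feature[OF S S])
  have EX: "DI M sigma_sphere (\<lambda>x y. (x \<bullet> y) ^ m) = (\<Sum>w\<in>Wl m. a w * b w)"
    unfolding a_def b_def by (rule DI_pow_feature[OF M S])
  have "0 \<le> (\<Sum>w\<in>Wl m. (a w - b w) * (a w - b w))" by (intro sum_nonneg) simp
  also have "\<dots> = (\<Sum>w\<in>Wl m. a w * a w) - 2 * (\<Sum>w\<in>Wl m. a w * b w) + (\<Sum>w\<in>Wl m. b w * b w)"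
    by (simp add: algebra_simps sum.distrib sum_subtractf sum_distrib_left)
  finally show ?thesis using EM ES EX X Y by simp
qed

lemma V_powr_eq:
  assumes "norm x = 1" "norm y = 1"
  shows "V x y powr s = (1 - (x \<bullet> y)\<^sup>2) powr (s / 2)"
proof -
  have "\<bar>x \<bullet> y\<bar> \<le> 1" using inner_unit_bound assms by blast
  then have z: "0 \<le> 1 - (x \<bullet> y)\<^sup>2" by (simp add: abs_square_le_1)
  have "V x y = (1 - (x \<bullet> y)\<^sup>2) powr (1/2)" unfolding V_def using powr_half_sqrt[OF z] by simp
  then show ?thesis by (simp add: powr_powr)
qed

lemma unit_sq_bounds: fixes x y :: "real^'n" shows "norm x = 1 \<Longrightarrow> norm y = 1 \<Longrightarrow> 0 \<le> (x \<bullet> y)\<^sup>2 \<and> (x \<bullet> y)\<^sup>2 \<le> 1"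
  using inner_unit_bound[of x y] by (simp add: abs_square_le_1)

lemma kb_cmult: "kb g B \<Longrightarrow> kb (\<lambda>x y. c * g x y) (\<bar>c\<bar> * B)"
  unfolding kb_def
proof safe
  assume "case_prod g \<in> borel_measurable (borel \<Otimes>\<^sub>M borel)"
  then show "(\<lambda>(x, y). c * g x y) \<in> borel_measurable (borel \<Otimes>\<^sub>M borel)"
    by (simp add: case_prod_beta' borel_measurable_times)
next
  fix x y :: "real^'a" assume "\<forall>x y. norm x = 1 \<longrightarrow> norm y = 1 \<longrightarrow> \<bar>g x y\<bar> \<le> B" "norm x = 1" "norm y = 1"
  then have "\<bar>g x y\<bar> \<le> B" by blast
  then show "\<bar>c * g x y\<bar> \<le> \<bar>c\<bar> * B" by (simp add: abs_mult mult_left_mono)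
qed

lemma kb_V: assumes "0 < s" shows "kb (\<lambda>x y :: real^'n. V x y powr s) 1"
  unfolding kb_def
proof safe
  show "(\<lambda>(x, y). V x y powr s) \<in> borel_measurable (borel \<Otimes>\<^sub>M borel :: ((real^'n) \<times> (real^'n)) measure)"
    unfolding V_def by measurable
  fix x y :: "real^'n" assume xy: "norm x = 1" "norm y = 1"
  have "V x y powr s = (1 - (x \<bullet> y)\<^sup>2) powr (s / 2)" by (rule V_powr_eq[OF xy])
  moreover have "(1 - (x \<bullet> y)\<^sup>2) powr (s / 2) \<le> 1 powr (s / 2)"
    using unit_sq_bounds[OF xy] assms by (intro powr_mono2) auto
  ultimately show "\<bar>V x y powr s\<bar> \<le> 1" by simp
qed

lemma kb_FN: assumes "0 < a" "a < 1" shows "kb (\<lambda>x y :: real^'n. FN a N ((x \<bullet> y)\<^sup>2)) 1"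
  unfolding kb_def
proof safe
  show "(\<lambda>(x, y). FN a N ((x \<bullet> y)\<^sup>2)) \<in> borel_measurable (borel \<Otimes>\<^sub>M borel :: ((real^'n) \<times> (real^'n)) measure)"
    unfolding FN_def by measurable
  fix x y :: "real^'n" assume xy: "norm x = 1" "norm y = 1"
  have "0 \<le> (1 - (x \<bullet> y)\<^sup>2) powr a" by simp
  also have "\<dots> \<le> FN a N ((x \<bullet> y)\<^sup>2)" using unit_sq_bounds[OF xy] assms by (intro FN_ge) auto
  finally have "0 \<le> FN a N ((x \<bullet> y)\<^sup>2)" .
  moreover have "FN a N ((x \<bullet> y)\<^sup>2) \<le> 1" using unit_sq_bounds[OF xy] assms by (intro FN_le1) auto
  ultimately show "\<bar>FN a N ((x \<bullet> y)\<^sup>2)\<bar> \<le> 1" by simp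
qed

lemma DI_FN:
  assumes M: "sphere_prob M" and N: "sphere_prob N"
  shows "DI M N (\<lambda>x y. FN a K ((x \<bullet> y)\<^sup>2)) = (\<Sum>k\<le>K. ca a k * DI M N (\<lambda>x y. (x \<bullet> y) ^ (2 * k)))"
proof -
  have "DI M N (\<lambda>x y. FN a K ((x \<bullet> y)\<^sup>2)) = DI M N (\<lambda>x y. \<Sum>k\<le>K. ca a k * (x \<bullet> y) ^ (2 * k))"
    by (simp add: FN_def power_mult)
  also have "\<dots> = (\<Sum>k\<le>K. DI M N (\<lambda>x y. ca a k * (x \<bullet> y) ^ (2 * k)))"
    by (rule DI_sum[OF M N kb_cmult[OF kb_pow]])
  finally show ?thesis by (simp add: DI_cmult)
qed

lemma part_i_le:
  assumes s: "0 < s" "s < 2" and M: "sphere_prob (M :: (real^'n) measure)"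
  shows "I_Vs s M \<le> I_Vs s (sigma_sphere :: (real^'n) measure)"
proof -
  define a where "a = s / 2"
  have a: "0 < a" "a < 1" using s by (auto simp: a_def)
  note S = sigma_sphere_prob[where 'n='n]
  have IM: "I_Vs s M = DI M M (\<lambda>x y. V x y powr s)" by (simp add: I_Vs_def DI_def)
  have IS: "I_Vs s (sigma_sphere :: (real^'n) measure) = DI (sigma_sphere :: (real^'n) measure) sigma_sphere (\<lambda>x y. V x y powr s)"
    by (simp add: I_Vs_def DI_def)
  have step: "DI M M (\<lambda>x y. V x y powr s) \<le> DI (sigma_sphere :: (real^'n) measure) sigma_sphere (\<lambda>x y. FN a K ((x \<bullet> y)\<^sup>2))" for K
  proof -
    have "DI M M (\<lambda>x y. V x y powr s) \<le> DI M M (\<lambda>x y. FN a K ((x \<bullet> y)\<^sup>2))"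
    proof (rule DI_mono[OF M M kb_V[OF s(1)] kb_FN[OF a]])
      fix x y :: "real^'n" assume xy: "norm x = 1" "norm y = 1"
      show "V x y powr s \<le> FN a K ((x \<bullet> y)\<^sup>2)"
        unfolding V_powr_eq[OF xy] a_def[symmetric] using unit_sq_bounds[OF xy] a by (intro FN_ge) auto
    qed
    also have "\<dots> = (\<Sum>k\<le>K. ca a k * DI M M (\<lambda>x y. (x \<bullet> y) ^ (2 * k)))" by (rule DI_FN[OF M M])
    also have "\<dots> \<le> (\<Sum>k\<le>K. ca a k * DI (sigma_sphere :: (real^'n) measure) sigma_sphere (\<lambda>x y. (x \<bullet> y) ^ (2 * k)))"
    proof (rule sum_mono)
      fix k assume "k \<in> {..K}"
      show "ca a k * DI M M (\<lambda>x y. (x \<bullet> y) ^ (2 * k)) \<le> ca a k * DI (sigma_sphere :: (real^'n) measure) sigma_sphere (\<lambda>x y. (x \<bullet> y) ^ (2 * k))"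
      proof (cases "k = 0")
        case True then show ?thesis by (simp add: DI_const[OF M M] DI_const[OF S S])
      next
        case False
        then have "ca a k \<le> 0" using ca_nonpos[OF a] by simp
        then show ?thesis using pow_sigma_min[OF M, of "2 * k"] by (simp add: mult_left_mono_neg)
      qed
    qed
    also have "\<dots> = DI (sigma_sphere :: (real^'n) measure) sigma_sphere (\<lambda>x y. FN a K ((x \<bullet> y)\<^sup>2))"
      by (rule DI_FN[OF S S, symmetric])
    finally show ?thesis .
  qed
  have lim: "(\<lambda>K. DI (sigma_sphere :: (real^'n) measure) sigma_sphere (\<lambda>x y. FN a K ((x \<bullet> y)\<^sup>2)))
      \<longlonglongrightarrow> DI (sigma_sphere :: (real^'n) measure) sigma_sphere (\<lambda>x y. V x y powr s)"
  proof (rule DI_lim[OF S S kb_FN[OF a] kb_V[OF s(1)]])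
    fix x y :: "real^'n" assume xy: "norm x = 1" "norm y = 1"
    show "(\<lambda>K. FN a K ((x \<bullet> y)\<^sup>2)) \<longlonglongrightarrow> V x y powr s"
      unfolding V_powr_eq[OF xy] a_def[symmetric] using unit_sq_bounds[OF xy] a by (intro FN_lim) auto
  qed
  have "DI M M (\<lambda>x y. V x y powr s) \<le> DI (sigma_sphere :: (real^'n) measure) sigma_sphere (\<lambda>x y. V x y powr s)"
    by (rule LIMSEQ_le_const[OF lim]) (use step in auto)
  then show ?thesis using IM IS by simp
qed

lemma part_i: assumes "0 < s" "s < 2" shows "maximizer s (sigma_sphere :: (real^'n) measure)"
  unfolding maximizer_def using sigma_sphere_prob part_i_le[OF assms] by blast

lemma DI_add:
  assumes M: "sphere_prob M" and N: "sphere_prob N" and g: "kb g B" and h: "kb h B'"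
  shows "DI M N (\<lambda>x y. g x y + h x y) = DI M N g + DI M N h"
proof -
  have "DI M N (\<lambda>x y. \<Sum>b\<in>{True, False}. (if b then g else h) x y) = (\<Sum>b\<in>{True, False}. DI M N (if b then g else h))"
    by (rule DI_sum[OF M N, where B="\<lambda>b. if b then B else B'"]) (use g h in auto)
  then show ?thesis by simp
qed

lemma vec_nth_meas[measurable (raw)]:
  "f \<in> borel_measurable M \<Longrightarrow> (\<lambda>x. (f x :: real^'n) $ i) \<in> borel_measurable M"
proof -
  have "(\<lambda>v::real^'n. v $ i) \<in> borel_measurable borel"
    by (intro borel_measurable_continuous_onI linear_continuous_on bounded_linear_vec_nth)
  moreover assume "f \<in> borel_measurable M"
  ultimately show ?thesis using measurable_compose by blast
qed

definition Mx :: "(real^'n) measure \<Rightarrow> 'n \<Rightarrow> 'n \<Rightarrow> real" where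
  "Mx M i j = (\<integral>x. x $ i * x $ j \<partial>M)"

lemma comp_bound: "norm (x::real^'n) = 1 \<Longrightarrow> \<bar>x $ i\<bar> \<le> 1"
  using component_le_norm_cart[of x i] by simp

lemma comp2_bound: "norm (x::real^'n) = 1 \<Longrightarrow> \<bar>x $ i * x $ j\<bar> \<le> 1"
  using comp_bound[of x i] comp_bound[of x j] unfolding abs_mult by (intro mult_le_one) auto

lemma kb_pair: "kb (\<lambda>x y :: real^'n. (x $ i * x $ j) * (y $ i * y $ j)) 1"
  unfolding kb_def
proof safe
  show "(\<lambda>(x, y). (x $ i * x $ j) * (y $ i * y $ j)) \<in> borel_measurable (borel \<Otimes>\<^sub>M borel :: ((real^'n) \<times> (real^'n)) measure)"
    by measurable
  fix x y :: "real^'n" assume "norm x = 1" "norm y = 1"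
  then have "\<bar>x $ i * x $ j\<bar> \<le> 1" "\<bar>y $ i * y $ j\<bar> \<le> 1" using comp2_bound by auto
  then show "\<bar>(x $ i * x $ j) * (y $ i * y $ j)\<bar> \<le> 1" unfolding abs_mult[of "x $ i * x $ j"] by (intro mult_le_one) auto
qed

lemma inner_sq_expand: "(x \<bullet> y)\<^sup>2 = (\<Sum>p\<in>UNIV. (x $ fst p * x $ snd p) * (y $ fst p * y $ snd p))"
  for x y :: "real^'n"
proof -
  have "(x \<bullet> y)\<^sup>2 = (\<Sum>i\<in>UNIV. x $ i * y $ i) * (\<Sum>j\<in>UNIV. x $ j * y $ j)"
    by (simp only: power2_eq_square inner_vec_def inner_real_def)
  also have "\<dots> = (\<Sum>i\<in>UNIV. \<Sum>j\<in>UNIV. (x $ i * y $ i) * (x $ j * y $ j))" by (rule sum_product)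
  also have "\<dots> = (\<Sum>(i, j)\<in>UNIV \<times> UNIV. (x $ i * y $ i) * (x $ j * y $ j))" by (rule sum.cartesian_product)
  also have "\<dots> = (\<Sum>p\<in>UNIV. (x $ fst p * x $ snd p) * (y $ fst p * y $ snd p))"
    by (simp add: UNIV_Times_UNIV[symmetric] case_prod_beta' algebra_simps del: UNIV_Times_UNIV)
  finally show ?thesis .
qed

lemma E2_formula:
  assumes M: "sphere_prob (M :: (real^'n) measure)"
  shows "DI M M (\<lambda>x y. (x \<bullet> y)\<^sup>2) = (\<Sum>p\<in>UNIV. (Mx M (fst p) (snd p))\<^sup>2)"
proof -
  have "DI M M (\<lambda>x y. (x \<bullet> y)\<^sup>2) = DI M M (\<lambda>x y. \<Sum>p\<in>UNIV. (x $ fst p * x $ snd p) * (y $ fst p * y $ snd p))"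
    by (simp only: inner_sq_expand)
  also have "\<dots> = (\<Sum>p\<in>UNIV. DI M M (\<lambda>x y. (x $ fst p * x $ snd p) * (y $ fst p * y $ snd p)))"
    by (rule DI_sum[OF M M kb_pair])
  also have "\<dots> = (\<Sum>p\<in>UNIV. (Mx M (fst p) (snd p))\<^sup>2)"
    by (simp add: DI_sep Mx_def power2_eq_square)
  finally show ?thesis .
qed

lemma trace_one:
  assumes M: "sphere_prob (M :: (real^'n) measure)"
  shows "(\<Sum>i\<in>UNIV. Mx M i i) = 1"
proof -
  interpret prob_space M using sp_basic M by blast
  have int: "integrable M (\<lambda>x. x $ i * x $ i)" for i
    by (rule sp_integrable[OF M _ comp2_bound]) measurable
  have "(\<Sum>i\<in>UNIV. Mx M i i) = (\<integral>x. (\<Sum>i\<in>UNIV. x $ i * x $ i) \<partial>M)"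
    unfolding Mx_def by (rule Bochner_Integration.integral_sum[symmetric]) (rule int)
  also have "\<dots> = (\<integral>x. 1 \<partial>M)"
  proof (rule integral_cong_AE)
    show "(\<lambda>x. \<Sum>i\<in>UNIV. x $ i * x $ i) \<in> borel_measurable M" by (rule sp_meas[OF M]) measurable
    show "(\<lambda>x. 1::real) \<in> borel_measurable M" by simp
    show "AE x in M. (\<Sum>i\<in>UNIV. x $ i * x $ i) = 1"
      using sp_basic(3)[OF M]
    proof eventually_elim
      fix x :: "real^'n" assume "norm x = 1"
      then have "x \<bullet> x = 1" by (simp add: norm_eq_1)
      then show "(\<Sum>i\<in>UNIV. x $ i * x $ i) = 1" by (simp add: inner_vec_def)
    qed
  qed
  also have "\<dots> = 1" by (simp add: prob_space)
  finally show ?thesis .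
qed

lemma I2_formula:
  assumes M: "sphere_prob (M :: (real^'n) measure)"
  shows "I_Vs 2 M = 1 - (\<Sum>p\<in>UNIV. (Mx M (fst p) (snd p))\<^sup>2)"
proof -
  have kb1: "kb (\<lambda>x y :: real^'n. 1::real) 1" by (simp add: kb_def)
  have kbm: "kb (\<lambda>x y :: real^'n. - 1 * (x \<bullet> y)\<^sup>2) 1" using kb_cmult[OF kb_pow[of 2], of "-1"] by simp
  have "I_Vs 2 M = DI M M (\<lambda>x y. V x y powr 2)" by (simp add: I_Vs_def DI_def)
  also have "\<dots> = DI M M (\<lambda>x y. 1 + - 1 * (x \<bullet> y)\<^sup>2)"
  proof (rule DI_cong[OF M M kb_V _])
    show "kb (\<lambda>x y :: real^'n. 1 + - 1 * (x \<bullet> y)\<^sup>2) 2" using kb_sum[of "{True, False}" "\<lambda>b. if b then (\<lambda>x y :: real^'n. 1::real) else (\<lambda>x y. - 1 * (x \<bullet> y)\<^sup>2)" "\<lambda>_. 1"] kb1 kbm by simp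
    fix x y :: "real^'n" assume xy: "norm x = 1" "norm y = 1"
    show "V x y powr 2 = 1 + - 1 * (x \<bullet> y)\<^sup>2"
      unfolding V_powr_eq[OF xy] using unit_sq_bounds[OF xy] by simp
  qed simp
  also have "\<dots> = DI M M (\<lambda>x y :: real^'n. 1::real) + DI M M (\<lambda>x y. - 1 * (x \<bullet> y)\<^sup>2)"
    by (rule DI_add[OF M M kb1 kbm])
  also have "\<dots> = 1 - DI M M (\<lambda>x y. (x \<bullet> y)\<^sup>2)" using DI_cmult[of M M "-1" "\<lambda>x y. (x \<bullet> y)\<^sup>2"] by (simp only: DI_const[OF M M])
  finally show ?thesis using E2_formula[OF M] by simp
qed

lemma sq_identity:
  fixes m :: "'n::finite \<Rightarrow> 'n \<Rightarrow> real"
  assumes tr: "(\<Sum>i\<in>UNIV. m i i) = 1"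
  shows "(\<Sum>p\<in>UNIV. (m (fst p) (snd p))\<^sup>2) = 1 / real CARD('n) + (\<Sum>p\<in>UNIV. (m (fst p) (snd p) - (if fst p = snd p then 1 / real CARD('n) else 0))\<^sup>2)"
proof -
  define c where "c = 1 / real CARD('n)"
  have cd: "real CARD('n) * c = 1" by (simp add: c_def)
  have d: "(\<Sum>p\<in>(UNIV :: ('n \<times> 'n) set). F p) = (\<Sum>i\<in>UNIV. \<Sum>j\<in>UNIV. F (i, j))" for F :: "'n \<times> 'n \<Rightarrow> real"
    by (simp add: UNIV_Times_UNIV[symmetric] sum.cartesian_product del: UNIV_Times_UNIV)
  have "(\<Sum>p\<in>UNIV. (m (fst p) (snd p) - (if fst p = snd p then c else 0))\<^sup>2)
      = (\<Sum>i\<in>UNIV. \<Sum>j\<in>UNIV. (m i j)\<^sup>2 - (if i = j then 2 * c * m i j - c\<^sup>2 else 0))"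
    unfolding d by (intro sum.cong refl) (auto simp: power2_eq_square algebra_simps)
  also have "\<dots> = (\<Sum>i\<in>UNIV. \<Sum>j\<in>UNIV. (m i j)\<^sup>2) - (\<Sum>i\<in>UNIV. 2 * c * m i i - c\<^sup>2)"
    by (simp add: sum_subtractf sum.If_cases)
  also have "(\<Sum>i\<in>UNIV. 2 * c * m i i - c\<^sup>2) = 2 * c * (\<Sum>i\<in>UNIV. m i i) - real CARD('n) * c\<^sup>2"
    by (simp add: sum_subtractf sum_distrib_left)
  also have "\<dots> = c" using tr cd by (simp add: power2_eq_square algebra_simps)
  finally show ?thesis unfolding d c_def by simp
qed

lemma AE_atom:
  assumes ae: "AE y in M. Q y" and z: "z \<in> space M" and pos: "emeasure M {z} \<noteq> 0"
  shows "Q z"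
proof (rule ccontr)
  assume nq: "\<not> Q z"
  from ae obtain N where N: "{y \<in> space M. \<not> Q y} \<subseteq> N" "N \<in> null_sets M"
    unfolding eventually_ae_filter by blast
  then have "{z} \<subseteq> N" using nq z by auto
  then have "emeasure M {z} \<le> emeasure M N" using N(2) by (intro emeasure_mono) auto
  then show False using N(2) pos by auto
qed

lemma AE_of_emeasure1:
  assumes P: "prob_space M" and A: "A \<in> sets M" and e: "emeasure M A = 1"
  shows "AE x in M. x \<in> A"
proof -
  interpret prob_space M by (rule P)
  have "emeasure M (space M - A) = emeasure M (space M) - emeasure M A"
    using A by (intro emeasure_compl) auto
  also have "\<dots> = 0" using e emeasure_space_1 by simp
  finally have "space M - A \<in> null_sets M" using A by (auto intro: null_setsI)
  then show ?thesis by (rule AE_I') auto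
qed

definition Ep :: "'n \<times> 'n \<Rightarrow> real^'n^'n" where "Ep p = (\<chi> i j. if (i, j) = p then 1 else 0)"

lemma iso_iff:
  assumes M: "sphere_prob (M :: (real^'n) measure)"
  shows "isotropic M \<longleftrightarrow> (\<forall>i j. Mx M i j = (if i = j then 1 / real CARD('n) else 0))"
proof -
  have Feq: "(\<lambda>x::real^'n. (\<chi> i j. x $ i * x $ j) :: real^'n^'n) = (\<lambda>x. \<Sum>p\<in>UNIV. (x $ fst p * x $ snd p) *\<^sub>R Ep p)"
  proof (rule ext)
    fix x :: "real^'n"
    have "(\<Sum>p\<in>UNIV. (x $ fst p * x $ snd p) * (if (i, j) = p then 1 else 0)) = x $ i * x $ j" for i j
    proof -
      have "(\<Sum>p\<in>UNIV. (x $ fst p * x $ snd p) * (if (i, j) = p then 1 else 0))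
          = (\<Sum>p\<in>UNIV. if (i, j) = p then x $ fst p * x $ snd p else 0)" by (intro sum.cong) auto
      also have "\<dots> = x $ i * x $ j" by (subst sum.delta') auto
      finally show ?thesis .
    qed
    then show "(\<chi> i j. x $ i * x $ j) = (\<Sum>p\<in>UNIV. (x $ fst p * x $ snd p) *\<^sub>R Ep p)"
      by (simp add: vec_eq_iff Ep_def)
  qed
  have int: "integrable M (\<lambda>x. x $ i * x $ j)" for i j
    by (rule sp_integrable[OF M _ comp2_bound]) measurable
  have "integral\<^sup>L M (\<lambda>x. (\<chi> i j. x $ i * x $ j) :: real^'n^'n) = (\<Sum>p\<in>UNIV. Mx M (fst p) (snd p) *\<^sub>R Ep p)"
    unfolding Feq Mx_def
    by (subst Bochner_Integration.integral_sum) (use int in auto)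
  also have "\<dots> = (\<chi> i j. Mx M i j)"
  proof -
    have "(\<Sum>p\<in>UNIV. Mx M (fst p) (snd p) * (if (i, j) = p then 1 else 0)) = Mx M i j" for i j
    proof -
      have "(\<Sum>p\<in>UNIV. Mx M (fst p) (snd p) * (if (i, j) = p then 1 else 0))
          = (\<Sum>p\<in>UNIV. if (i, j) = p then Mx M (fst p) (snd p) else 0)" by (intro sum.cong) auto
      also have "\<dots> = Mx M i j" by (subst sum.delta') auto
      finally show ?thesis .
    qed
    then show ?thesis by (simp add: vec_eq_iff Ep_def)
  qed
  finally have I: "integral\<^sup>L M (\<lambda>x. (\<chi> i j. x $ i * x $ j) :: real^'n^'n) = (\<chi> i j. Mx M i j)" .
  show ?thesis unfolding isotropic_def I by (auto simp: vec_eq_iff mat_def)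
qed

definition Dm :: "(real^'n) measure" where
  "Dm = distr (measure_pmf (pmf_of_set (UNIV :: 'n set))) borel (\<lambda>i. axis i 1)"

lemma Dm_emeasure: "emeasure (Dm :: (real^'n) measure) A = card {i. axis i 1 \<in> A} / CARD('n)"
  if "A \<in> sets borel"
proof -
  have "emeasure (Dm :: (real^'n) measure) A = emeasure (measure_pmf (pmf_of_set (UNIV :: 'n set))) ((\<lambda>i. axis i 1) -` A \<inter> UNIV)"
    unfolding Dm_def by (subst emeasure_distr) (use that in auto)
  also have "\<dots> = card (UNIV \<inter> ((\<lambda>i. axis i 1) -` A \<inter> UNIV)) / card (UNIV :: 'n set)"
    by (rule emeasure_pmf_of_set) auto
  finally show ?thesis by (simp add: vimage_def)
qed

lemma Dm_struct:
  "sphere_prob (Dm :: (real^'n) measure) \<and> orthonormal_basis (\<lambda>i::'n. axis i (1::real))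
   \<and> emeasure (Dm :: (real^'n) measure) (\<Union>i. {axis i 1, - axis i 1}) = 1
   \<and> (\<forall>i. measure (Dm :: (real^'n) measure) {axis i 1, - axis i 1} = 1 / real CARD('n))"
proof (intro conjI allI)
  have ps: "prob_space (Dm :: (real^'n) measure)" unfolding Dm_def
    by (rule measure_pmf.prob_space_distr) simp
  have sets: "sets (Dm :: (real^'n) measure) = sets borel" by (simp add: Dm_def)
  have "emeasure (Dm :: (real^'n) measure) (sphere 0 1) = 1"
    by (subst Dm_emeasure) auto
  then show "sphere_prob (Dm :: (real^'n) measure)" using ps sets by (simp add: sphere_prob_def)
  show "orthonormal_basis (\<lambda>i::'n. axis i (1::real))" by (simp add: orthonormal_basis_def inner_axis_axis)
  have cl: "(\<Union>i. {axis i 1, - axis i 1}) \<in> sets (borel :: (real^'n) measure)"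
  proof -
    have "finite (\<Union>i::'n. {axis i 1, - axis i (1::real)})" by simp
    then show ?thesis by (simp add: finite_imp_closed borel_closed)
  qed
  have pre2: "{j. axis j 1 \<in> (\<Union>i. {axis i 1, - axis i (1::real)})} = (UNIV :: 'n set)" by auto
  show "emeasure (Dm :: (real^'n) measure) (\<Union>i. {axis i 1, - axis i 1}) = 1"
    by (subst Dm_emeasure[OF cl]) (simp only: pre2, simp)
  fix i :: 'n
  have ne: "axis j 1 \<noteq> - axis i (1::real)" for j
  proof
    assume "axis j 1 = - axis i (1::real)"
    then have "axis j 1 $ i = - axis i (1::real) $ i" by simp
    then show False by (auto simp: axis_def split: if_splits)
  qed
  have pre: "{j. axis j 1 \<in> {axis i 1, - axis i (1::real)}} = {i}"
    using ne by (auto simp: axis_eq_axis)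
  have "emeasure (Dm :: (real^'n) measure) {axis i 1, - axis i 1} = 1 / real CARD('n)"
    by (subst Dm_emeasure) (simp, simp only: pre, simp add: divide_ennreal)
  then show "measure (Dm :: (real^'n) measure) {axis i 1, - axis i 1} = 1 / real CARD('n)"
    by (simp add: measure_def)
qed

lemma finite_borel: "finite (A :: (real^'n) set) \<Longrightarrow> A \<in> sets borel"
  by (simp add: finite_imp_closed borel_closed)

lemma unit_parallel:
  fixes x y :: "real^'n"
  assumes x: "norm x = 1" and y: "norm y = 1" and c: "(x \<bullet> y)\<^sup>2 = 1"
  shows "y = x \<or> y = - x"
proof -
  define c where "c = x \<bullet> y"
  have xx: "x \<bullet> x = 1" and yy: "y \<bullet> y = 1" using x y by (simp_all add: norm_eq_1)
  have "(y - c *\<^sub>R x) \<bullet> (y - c *\<^sub>R x) = y \<bullet> y - 2 * c * (x \<bullet> y) + c\<^sup>2 * (x \<bullet> x)"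
    by (simp add: inner_diff_left inner_diff_right inner_commute power2_eq_square algebra_simps)
  also have "\<dots> = 0" using xx yy c by (simp add: c_def power2_eq_square)
  finally have "y = c *\<^sub>R x" by simp
  moreover have "c = 1 \<or> c = -1" using c by (simp add: c_def power2_eq_1_iff)
  ultimately show ?thesis by auto
qed

lemma ortho_unit: "orthonormal_basis e \<Longrightarrow> norm (e i) = 1"
  unfolding orthonormal_basis_def by (metis norm_eq_1)

lemma struct_I:
  assumes M: "sphere_prob (M :: (real^'n) measure)" and s: "0 < s" and e: "orthonormal_basis e"
    and U: "emeasure M (\<Union>i. {e i, - e i}) = 1" and m: "\<forall>i. measure M {e i, - e i} = 1 / real CARD('n)"
  shows "I_Vs s M = 1 - 1 / real CARD('n)"
proof -
  interpret prob_space M using sp_basic M by blast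
  have sM: "sets M = sets borel" using sp_basic M by blast
  define Fs where "Fs = (\<Union>i. {e i, - e i})"
  have ee: "e i \<bullet> e j = (if i = j then 1 else 0)" for i j using e by (simp add: orthonormal_basis_def)
  have Fsets: "Fs \<in> sets M" unfolding sM Fs_def by (rule finite_borel) simp
  have lsets: "{e i, - e i} \<in> sets M" for i unfolding sM by (rule finite_borel) simp
  have AEF: "AE y in M. y \<in> Fs" by (rule AE_of_emeasure1[OF prob_space_axioms Fsets]) (use U in \<open>simp add: Fs_def\<close>)
  have key: "V x y powr s = 1 - indicator {e i, - e i} y" if x: "x \<in> {e i, - e i}" and y: "y \<in> Fs" for x y i
  proof -
    obtain j where j: "y \<in> {e j, - e j}" using y by (auto simp: Fs_def)
    have sq: "(x \<bullet> y)\<^sup>2 = (if i = j then 1 else 0)" using x j by (auto simp: ee)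
    have ind: "indicator {e i, - e i} y = (if i = j then 1 else (0::real))"
    proof (cases "i = j")
      case True then show ?thesis using j by simp
    next
      case False
      have "y \<noteq> e i \<and> y \<noteq> - e i"
      proof (intro conjI notI)
        assume "y = e i" then have "y \<bullet> e i = 1" using ee[of i i] by simp
        moreover have "y \<bullet> e i = 0" using j False ee[of j i] by auto
        ultimately show False by simp
      next
        assume "y = - e i" then have "y \<bullet> e i = -1" using ee[of i i] by simp
        moreover have "y \<bullet> e i = 0" using j False ee[of j i] by auto
        ultimately show False by simp
      qed
      then show ?thesis using False by simp
    qed
    show ?thesis unfolding V_def sq ind by (simp add: s)
  qed
  have inner: "(\<integral>y. V x y powr s \<partial>M) = 1 - 1 / real CARD('n)" if x: "x \<in> Fs" for x
  proof -
    obtain i where i: "x \<in> {e i, - e i}" using x by (auto simp: Fs_def)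
    have "(\<integral>y. V x y powr s \<partial>M) = (\<integral>y. 1 - indicator {e i, - e i} y \<partial>M)"
    proof (rule integral_cong_AE)
      show "(\<lambda>y. V x y powr s) \<in> borel_measurable M" by (rule sp_meas[OF M kb_slice[OF kb_V[OF s]]])
      have [measurable]: "{e i, - e i} \<in> sets M" by (rule lsets)
      show "(\<lambda>y. 1 - indicator {e i, - e i} y :: real) \<in> borel_measurable M" by measurable
      show "AE y in M. V x y powr s = 1 - indicator {e i, - e i} y" using AEF key[OF i] by auto
    qed
    also have "\<dots> = 1 - measure M {e i, - e i}"
      using lsets[of i] by (subst Bochner_Integration.integral_diff) (auto simp: prob_space emeasure_eq_measure)
    finally show ?thesis using m by simp
  qed
  have "I_Vs s M = (\<integral>x. (1 - 1 / real CARD('n)) \<partial>M)" unfolding I_Vs_def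
  proof (rule integral_cong_AE)
    show "(\<lambda>x. \<integral>y. V x y powr s \<partial>M) \<in> borel_measurable M"
      by (rule sp_meas[OF M kb_outer_meas[OF M kb_V[OF s]]])
    show "AE x in M. (\<integral>y. V x y powr s \<partial>M) = 1 - 1 / real CARD('n)" using AEF inner by auto
  qed simp
  then show ?thesis by (simp add: prob_space)
qed

definition Qf :: "(real^'n) measure \<Rightarrow> real" where
  "Qf M = (\<Sum>p\<in>UNIV. (Mx M (fst p) (snd p) - (if fst p = snd p then 1 / real CARD('n) else 0))\<^sup>2)"

lemma I2_Q: assumes M: "sphere_prob (M :: (real^'n) measure)" shows "I_Vs 2 M = 1 - 1 / real CARD('n) - Qf M"
  using I2_formula[OF M] sq_identity[of "Mx M", OF trace_one[OF M]] unfolding Qf_def by simp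

lemma Qf_nonneg: "0 \<le> Qf M" unfolding Qf_def by (intro sum_nonneg) simp

lemma Qf_zero: "Qf (M :: (real^'n) measure) = 0 \<longleftrightarrow> (\<forall>i j. Mx M i j = (if i = j then 1 / real CARD('n) else 0))"
proof -
  have "Qf M = 0 \<longleftrightarrow> (\<forall>p\<in>UNIV. (Mx M (fst p) (snd p) - (if fst p = snd p then 1 / real CARD('n) else 0))\<^sup>2 = 0)"
    unfolding Qf_def by (intro sum_nonneg_eq_0_iff) auto
  also have "\<dots> \<longleftrightarrow> (\<forall>i j. Mx M i j = (if i = j then 1 / real CARD('n) else 0))" by auto
  finally show ?thesis .
qed

lemma Dm_I: "0 < s \<Longrightarrow> I_Vs s (Dm :: (real^'n) measure) = 1 - 1 / real CARD('n)"
  using Dm_struct[where 'n='n] struct_I by blast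

lemma part_ii:
  assumes M: "sphere_prob (M :: (real^'n) measure)"
  shows "maximizer 2 M \<longleftrightarrow> isotropic M"
proof
  assume mx: "maximizer 2 M"
  have "I_Vs 2 (Dm :: (real^'n) measure) \<le> I_Vs 2 M" using mx Dm_struct unfolding maximizer_def by blast
  then have "Qf M \<le> 0" using Dm_I[where 'n='n, of 2] I2_Q[OF M] by simp
  then have "Qf M = 0" using Qf_nonneg[of M] by simp
  then show "isotropic M" using Qf_zero iso_iff[OF M] by blast
next
  assume "isotropic M"
  then have "Qf M = 0" using Qf_zero iso_iff[OF M] by blast
  then have IM: "I_Vs 2 M = 1 - 1 / real CARD('n)" using I2_Q[OF M] by simp
  show "maximizer 2 M" unfolding maximizer_def
  proof (intro conjI allI impI M)
    fix \<nu> :: "(real^'n) measure" assume "sphere_prob \<nu>"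
    then show "I_Vs 2 \<nu> \<le> I_Vs 2 M" using I2_Q Qf_nonneg[of \<nu>] IM by fastforce
  qed
qed

lemma V_bounds: "norm x = 1 \<Longrightarrow> norm y = 1 \<Longrightarrow> 0 \<le> V x y \<and> V x y \<le> 1"
  for x y :: "real^'n"
  using unit_sq_bounds[of x y] unfolding V_def by (auto simp: real_sqrt_le_1_iff)

lemma Is_le_I2:
  assumes M: "sphere_prob (M :: (real^'n) measure)" and s: "2 \<le> s"
  shows "I_Vs s M \<le> I_Vs 2 M"
proof -
  have "DI M M (\<lambda>x y. V x y powr s) \<le> DI M M (\<lambda>x y. V x y powr 2)"
  proof (rule DI_mono[OF M M kb_V kb_V])
    fix x y :: "real^'n" assume "norm x = 1" "norm y = 1"
    then show "V x y powr s \<le> V x y powr 2" using V_bounds s by (intro powr_mono') auto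
  qed (use s in auto)
  then show ?thesis by (simp add: I_Vs_def DI_def)
qed

lemma pm_cases:
  fixes x y z :: "real^'n"
  assumes "z = x \<or> z = - x" "z = y \<or> z = - y"
  shows "{x, - x} = {y, - y}"
proof -
  have "x = y \<or> x = - y" using assms by (metis minus_minus)
  then show ?thesis
  proof
    assume "x = y" then show ?thesis by simp
  next
    assume "x = - y" then show ?thesis by (simp add: insert_commute)
  qed
qed

lemma comb:
  fixes M :: "(real^'n) measure"
  assumes M: "sphere_prob M" and AEP: "AE x in M. P x"
    and P: "\<And>x. P x \<Longrightarrow> norm x = 1 \<and> measure M {x, - x} = 1 / real CARD('n) \<and> (AE y in M. (x \<bullet> y)\<^sup>2 = 0 \<or> (x \<bullet> y)\<^sup>2 = 1)"
  shows "\<exists>e. orthonormal_basis e \<and> emeasure M (\<Union>i. {e i, - e i}) = 1 \<and> (\<forall>i. measure M {e i, - e i} = 1 / real CARD('n))"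
proof -
  interpret prob_space M using sp_basic M by blast
  have sM: "sets M = sets borel" using sp_basic M by blast
  have spM: "space M = UNIV" using sets_eq_imp_space_eq[OF sM] by simp
  define d where "d = real CARD('n)"
  have d0: "0 < d" by (simp add: d_def)
  define S where "S = {x. P x}"
  define L where "L = (\<lambda>x. {x, - x}) ` S"
  have Lsets: "l \<in> sets M" if "l \<in> L" for l using that unfolding sM L_def by (auto intro: finite_borel)
  have Lmeas: "measure M l = 1 / d" if "l \<in> L" for l using that P unfolding L_def S_def d_def by auto
  have Ldisj: "l1 \<inter> l2 = {}" if l1L: "l1 \<in> L" and l2L: "l2 \<in> L" and ne12: "l1 \<noteq> l2" for l1 l2
  proof (rule ccontr)
    assume "l1 \<inter> l2 \<noteq> {}"
    then obtain z where z: "z \<in> l1" "z \<in> l2" by blast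
    obtain x y where xy: "l1 = {x, - x}" "l2 = {y, - y}" using l1L l2L unfolding L_def by blast
    have zx: "z = x \<or> z = - x" and zy: "z = y \<or> z = - y" using z xy by simp_all
    have "l1 = l2" using pm_cases[OF zx zy] xy by simp
    then show False using ne12 by simp
  qed
  have fin_meas: "measure M (\<Union>L') = real (card L') / d" if "finite L'" "L' \<subseteq> L" for L'
  proof -
    have "measure M (\<Union>l\<in>L'. id l) = (\<Sum>l\<in>L'. measure M (id l))"
    proof (rule measure_finite_Union[OF that(1)])
      show "id ` L' \<subseteq> sets M" using that Lsets by auto
      show "disjoint_family_on id L'" unfolding disjoint_family_on_def using that Ldisj by auto
    qed (simp add: emeasure_eq_measure)
    also have "\<dots> = (\<Sum>l\<in>L'. 1 / d)" using that Lmeas by (intro sum.cong) auto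
    finally show ?thesis by simp
  qed
  have card_le: "card L' \<le> CARD('n)" if "finite L'" "L' \<subseteq> L" for L'
  proof -
    have "real (card L') / d \<le> 1" using fin_meas[OF that] by (metis prob_le_1)
    then show ?thesis using d0 by (simp add: d_def field_simps)
  qed
  have finL: "finite L"
  proof (rule ccontr)
    assume "infinite L"
    then obtain B where "finite B" "card B = Suc CARD('n)" "B \<subseteq> L"
      using infinite_arbitrarily_large by blast
    then show False using card_le by fastforce
  qed
  have finS: "finite S"
  proof (rule finite_subset)
    show "S \<subseteq> \<Union>L" unfolding L_def by auto
    show "finite (\<Union>L)" using finL unfolding L_def by auto
  qed
  have Ssets: "S \<in> sets M" unfolding sM by (rule finite_borel[OF finS])
  have ULsets: "\<Union>L \<in> sets M" unfolding sM using finL by (intro finite_borel) (auto simp: L_def)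
  have S1: "measure M S = 1"
    using AE_in_set_eq_1[OF Ssets] AEP by (simp add: S_def)
  have UL1: "measure M (\<Union>L) = 1"
  proof (rule antisym)
    show "measure M (\<Union>L) \<le> 1" by simp
    have "measure M S \<le> measure M (\<Union>L)" using ULsets by (intro finite_measure_mono) (auto simp: L_def)
    then show "1 \<le> measure M (\<Union>L)" using S1 by simp
  qed
  have cardL: "card L = CARD('n)" using fin_meas[OF finL order.refl] UL1 d0 by (simp add: d_def field_simps)
  have orth: "x \<bullet> x' = 0" if xS: "x \<in> S" and x'S: "x' \<in> S" and ne: "{x, - x} \<noteq> {x', - x'}" for x x'
  proof -
    have Px: "norm x = 1" "AE y in M. (x \<bullet> y)\<^sup>2 = 0 \<or> (x \<bullet> y)\<^sup>2 = 1" using P xS by (auto simp: S_def)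
    have Px': "norm x' = 1" "measure M {x', - x'} = 1 / d" using P x'S by (auto simp: S_def d_def)
    have "\<exists>z\<in>{x', - x'}. emeasure M {z} \<noteq> 0"
    proof (rule ccontr)
      assume "\<not> (\<exists>z\<in>{x', - x'}. emeasure M {z} \<noteq> 0)"
      then have "emeasure M {x'} = 0" "emeasure M {- x'} = 0" by auto
      moreover have "emeasure M {x', - x'} \<le> emeasure M {x'} + emeasure M {- x'}"
        using emeasure_subadditive[of "{x'}" M "{- x'}"] sM by (simp add: insert_is_Un[of x' "{- x'}"])
      ultimately have "emeasure M {x', - x'} = 0" by simp
      then have "measure M {x', - x'} = 0" by (simp add: measure_def)
      then show False using Px' d0 by simp
    qed
    then obtain z where z: "z \<in> {x', - x'}" "emeasure M {z} \<noteq> 0" by blast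
    have nz: "norm z = 1" using z Px' by auto
    have "(x \<bullet> z)\<^sup>2 = 0 \<or> (x \<bullet> z)\<^sup>2 = 1" by (rule AE_atom[OF Px(2)]) (use z spM in auto)
    moreover have "(x \<bullet> z)\<^sup>2 \<noteq> 1"
    proof
      assume "(x \<bullet> z)\<^sup>2 = 1"
      then have "z = x \<or> z = - x" using unit_parallel[OF Px(1) nz] by simp
      moreover have "z = x' \<or> z = - x'" using z by simp
      ultimately have "{x', - x'} = {x, - x}" using pm_cases by metis
      then show False using ne by simp
    qed
    ultimately have "x \<bullet> z = 0" by simp
    then show ?thesis using z by auto
  qed
  obtain h where h: "bij_betw h (UNIV :: 'n set) L"
    using finite_same_card_bij[of "UNIV :: 'n set" L] finL cardL by auto
  have "\<forall>l\<in>L. \<exists>x\<in>S. l = {x, - x}" unfolding L_def by auto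
  then obtain r where r: "\<And>l. l \<in> L \<Longrightarrow> r l \<in> S \<and> l = {r l, - r l}" by metis
  define e where "e i = r (h i)" for i
  have hL: "h i \<in> L" for i using h by (auto simp: bij_betw_def)
  have eS: "e i \<in> S" for i using r[OF hL] by (simp add: e_def)
  have eL: "{e i, - e i} = h i" for i using r[OF hL] by (simp add: e_def)
  have ob: "orthonormal_basis e" unfolding orthonormal_basis_def
  proof (intro allI)
    fix i j
    show "e i \<bullet> e j = (if i = j then 1 else 0)"
    proof (cases "i = j")
      case True
      have "norm (e i) = 1" using P eS by (auto simp: S_def)
      then show ?thesis using True by (simp add: norm_eq_1)
    next
      case False
      then have "h i \<noteq> h j" using h by (auto simp: bij_betw_def inj_on_def)
      then have "{e i, - e i} \<noteq> {e j, - e j}" by (simp add: eL)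
      then show ?thesis using orth[OF eS eS] False by simp
    qed
  qed
  have U: "(\<Union>i. {e i, - e i}) = \<Union>L"
  proof -
    have "(\<Union>i. {e i, - e i}) = (\<Union>i. h i)" by (simp add: eL)
    also have "\<dots> = \<Union>L" using h by (simp add: bij_betw_def)
    finally show ?thesis .
  qed
  have "emeasure M (\<Union>i. {e i, - e i}) = 1" unfolding U using UL1 by (simp add: emeasure_eq_measure)
  moreover have "measure M {e i, - e i} = 1 / real CARD('n)" for i using P eS by (auto simp: S_def)
  ultimately show ?thesis using ob by blast
qed

lemma kb_add: "kb g B \<Longrightarrow> kb h B' \<Longrightarrow> kb (\<lambda>x y. g x y + h x y) (B + B')"
  using kb_sum[of "{True, False}" "\<lambda>b. if b then g else h" "\<lambda>b. if b then B else B'"] by simp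

lemma V2s:
  fixes x y :: "real^'n"
  assumes xy: "norm x = 1" "norm y = 1" and s: "2 < s" and eq: "V x y powr 2 = V x y powr s"
  shows "(x \<bullet> y)\<^sup>2 = 0 \<or> (x \<bullet> y)\<^sup>2 = 1"
proof -
  have vb: "0 \<le> V x y" "V x y \<le> 1" using V_bounds[OF xy] by auto
  have z: "0 \<le> 1 - (x \<bullet> y)\<^sup>2" using unit_sq_bounds[OF xy] by simp
  consider "V x y = 0" | "V x y = 1" | "0 < V x y \<and> V x y < 1" using vb by fastforce
  then show ?thesis
  proof cases
    case 1 then have "1 - (x \<bullet> y)\<^sup>2 = 0" using z by (simp add: V_def)
    then show ?thesis by simp
  next
    case 2 then have "1 - (x \<bullet> y)\<^sup>2 = 1" using z by (simp add: V_def)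
    then show ?thesis by simp
  next
    case 3 then have "V x y powr s < V x y powr 2" using s by (intro powr_less_mono') auto
    then show ?thesis using eq by simp
  qed
qed

lemma inner_sq_integral:
  assumes M: "sphere_prob (M :: (real^'n) measure)" and iso: "\<forall>i j. Mx M i j = (if i = j then 1 / real CARD('n) else 0)"
    and x: "norm x = 1"
  shows "(\<integral>y. (x \<bullet> y)\<^sup>2 \<partial>M) = 1 / real CARD('n)"
proof -
  have int: "integrable M (\<lambda>y. (x $ fst p * x $ snd p) * (y $ fst p * y $ snd p))" for p
    by (intro integrable_mult_right sp_integrable[OF M _ comp2_bound]) measurable
  have "(\<integral>y. (x \<bullet> y)\<^sup>2 \<partial>M) = (\<integral>y. (\<Sum>p\<in>UNIV. (x $ fst p * x $ snd p) * (y $ fst p * y $ snd p)) \<partial>M)"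
    by (simp only: inner_sq_expand)
  also have "\<dots> = (\<Sum>p\<in>UNIV. (x $ fst p * x $ snd p) * Mx M (fst p) (snd p))"
    by (subst Bochner_Integration.integral_sum) (use int in \<open>auto simp: Mx_def\<close>)
  also have "\<dots> = (\<Sum>i\<in>UNIV. \<Sum>j\<in>UNIV. (x $ i * x $ j) * Mx M i j)"
    by (simp add: UNIV_Times_UNIV[symmetric] sum.cartesian_product case_prod_beta' del: UNIV_Times_UNIV)
  also have "\<dots> = (\<Sum>i\<in>UNIV. (x $ i * x $ i) / real CARD('n))"
  proof (rule sum.cong[OF refl])
    fix i
    have "(\<Sum>j\<in>UNIV. (x $ i * x $ j) * Mx M i j) = (\<Sum>j\<in>UNIV. if i = j then (x $ i * x $ j) / real CARD('n) else 0)"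
      using iso by (intro sum.cong) auto
    also have "\<dots> = (x $ i * x $ i) / real CARD('n)" by (subst sum.delta') auto
    finally show "(\<Sum>j\<in>UNIV. (x $ i * x $ j) * Mx M i j) = (x $ i * x $ i) / real CARD('n)" .
  qed
  also have "\<dots> = (x \<bullet> x) / real CARD('n)" by (simp add: inner_vec_def sum_divide_distrib)
  also have "x \<bullet> x = 1" using x by (simp add: norm_eq_1)
  finally show ?thesis by simp
qed

lemma part_iii:
  assumes s: "2 < s"
  shows "maximizer s (M :: (real^'n) measure) \<longleftrightarrow> sphere_prob M \<and>
    (\<exists>e. orthonormal_basis e \<and> emeasure M (\<Union>i. {e i, - e i}) = 1 \<and> (\<forall>i. measure M {e i, - e i} = 1 / real CARD('n)))"
proof
  assume mx: "maximizer s M"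
  then have M: "sphere_prob M" by (simp add: maximizer_def)
  have s0: "0 < s" using s by simp
  have "I_Vs s (Dm :: (real^'n) measure) \<le> I_Vs s M" using mx Dm_struct unfolding maximizer_def by blast
  then have lo: "1 - 1 / real CARD('n) \<le> I_Vs s M" using Dm_I[where 'n='n, OF s0] by simp
  have hi: "I_Vs s M \<le> I_Vs 2 M" using Is_le_I2[OF M] s by simp
  have "Qf M \<le> 0" using lo hi I2_Q[OF M] by simp
  then have Q0: "Qf M = 0" using Qf_nonneg[of M] by simp
  then have iso: "\<forall>i j. Mx M i j = (if i = j then 1 / real CARD('n) else 0)" using Qf_zero by blast
  have eqI: "I_Vs 2 M = I_Vs s M" using lo hi I2_Q[OF M] Q0 by simp
  have kbg: "kb (\<lambda>x y :: real^'n. V x y powr 2 + - 1 * V x y powr s) (1 + \<bar>- 1\<bar> * 1)"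
    by (intro kb_add kb_cmult kb_V) (use s in auto)
  have k2: "kb (\<lambda>x y :: real^'n. V x y powr 2) 1" by (rule kb_V) simp
  have ks: "kb (\<lambda>x y :: real^'n. V x y powr s) 1" by (rule kb_V) (use s in simp)
  have "DI M M (\<lambda>x y. V x y powr 2 + - 1 * V x y powr s) = DI M M (\<lambda>x y. V x y powr 2) + - 1 * DI M M (\<lambda>x y. V x y powr s)"
    by (simp only: DI_add[OF M M k2 kb_cmult[OF ks]] DI_cmult)
  also have "\<dots> = 0" using eqI by (simp add: I_Vs_def DI_def)
  finally have DI0: "DI M M (\<lambda>x y. V x y powr 2 + - 1 * V x y powr s) = 0" .
  have nn: "0 \<le> V x y powr 2 + - 1 * V x y powr s" if "norm x = 1" "norm y = 1" for x y :: "real^'n"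
    using V_bounds[OF that] s powr_mono'[of 2 s "V x y"] by simp
  have AE1: "AE x in M. norm x = 1 \<and> (AE y in M. V x y powr 2 + - 1 * V x y powr s = 0)"
    by (rule DI_zero[OF M kbg nn DI0])
  define P where "P x \<longleftrightarrow> norm x = 1 \<and> measure M {x, - x} = 1 / real CARD('n) \<and> (AE y in M. (x \<bullet> y)\<^sup>2 = 0 \<or> (x \<bullet> y)\<^sup>2 = 1)" for x
  have "AE x in M. P x"
    using AE1
  proof eventually_elim
    fix x assume H: "norm x = 1 \<and> (AE y in M. V x y powr 2 + - 1 * V x y powr s = 0)"
    then have x: "norm x = 1" by simp
    have AEv: "AE y in M. V x y powr 2 + - 1 * V x y powr s = 0" using H by simp
    have AEy: "AE y in M. (x \<bullet> y)\<^sup>2 = 0 \<or> (x \<bullet> y)\<^sup>2 = 1"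
      using AEv sp_basic(3)[OF M]
    proof eventually_elim
      fix y :: "real^'n" assume "V x y powr 2 + - 1 * V x y powr s = 0" "norm y = 1"
      then show "(x \<bullet> y)\<^sup>2 = 0 \<or> (x \<bullet> y)\<^sup>2 = 1" using V2s[OF x _ s] by simp
    qed
    have xx: "x \<bullet> x = 1" using x by (simp add: norm_eq_1)
    have lsets: "{x, - x} \<in> sets M" using sp_basic(2)[OF M] by (simp add: finite_borel)
    have "(\<integral>y. (x \<bullet> y)\<^sup>2 \<partial>M) = (\<integral>y. indicator {x, - x} y \<partial>M)"
    proof (rule integral_cong_AE)
      show "(\<lambda>y. (x \<bullet> y)\<^sup>2) \<in> borel_measurable M" by (rule sp_meas[OF M]) measurable
      have [measurable]: "{x, - x} \<in> sets M" by (rule lsets)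
      show "(\<lambda>y. indicator {x, - x} y :: real) \<in> borel_measurable M" by measurable
      show "AE y in M. (x \<bullet> y)\<^sup>2 = indicator {x, - x} y"
        using AEy sp_basic(3)[OF M]
      proof eventually_elim
        fix y :: "real^'n" assume y: "(x \<bullet> y)\<^sup>2 = 0 \<or> (x \<bullet> y)\<^sup>2 = 1" "norm y = 1"
        show "(x \<bullet> y)\<^sup>2 = indicator {x, - x} y"
        proof (cases "(x \<bullet> y)\<^sup>2 = 1")
          case True
          then have "y = x \<or> y = - x" using unit_parallel[OF x y(2)] by simp
          then show ?thesis using True by auto
        next
          case False
          then have "(x \<bullet> y)\<^sup>2 = 0" using y by simp
          moreover have "y \<notin> {x, - x}" using \<open>(x \<bullet> y)\<^sup>2 = 0\<close> xx by auto
          ultimately show ?thesis by simp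
        qed
      qed
    qed
    also have "\<dots> = measure M {x, - x}" using sp_basic(2)[OF M] sets_eq_imp_space_eq by fastforce
    finally have "measure M {x, - x} = 1 / real CARD('n)" using inner_sq_integral[OF M iso x] by simp
    then show "P x" unfolding P_def using x AEy by simp
  qed
  moreover have "\<And>x. P x \<Longrightarrow> norm x = 1 \<and> measure M {x, - x} = 1 / real CARD('n) \<and> (AE y in M. (x \<bullet> y)\<^sup>2 = 0 \<or> (x \<bullet> y)\<^sup>2 = 1)"
    unfolding P_def by simp
  ultimately show "sphere_prob M \<and> (\<exists>e. orthonormal_basis e \<and> emeasure M (\<Union>i. {e i, - e i}) = 1 \<and> (\<forall>i. measure M {e i, - e i} = 1 / real CARD('n)))"
    using comb[OF M] M by blast
next
  assume R: "sphere_prob M \<and> (\<exists>e. orthonormal_basis e \<and> emeasure M (\<Union>i. {e i, - e i}) = 1 \<and> (\<forall>i. measure M {e i, - e i} = 1 / real CARD('n)))"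
  then have M: "sphere_prob M" by simp
  have IM: "I_Vs s M = 1 - 1 / real CARD('n)" using R struct_I[OF M] s by auto
  show "maximizer s M" unfolding maximizer_def
  proof (intro conjI allI impI M)
    fix \<nu> :: "(real^'n) measure" assume N: "sphere_prob \<nu>"
    have "I_Vs s \<nu> \<le> I_Vs 2 \<nu>" using Is_le_I2[OF N] s by simp
    also have "\<dots> \<le> 1 - 1 / real CARD('n)" using I2_Q[OF N] Qf_nonneg[of \<nu>] by simp
    finally show "I_Vs s \<nu> \<le> I_Vs s M" using IM by simp
  qed
qed

theorem proposition2p12:
  fixes s :: real and \<mu> :: "(real^'n) measure"
  shows "(0 < s \<and> s < 2 \<longrightarrow> maximizer s (sigma_sphere :: (real^'n) measure))
       \<and> (s = 2 \<longrightarrow> sphere_prob \<mu> \<longrightarrow> (maximizer s \<mu> \<longleftrightarrow> isotropic \<mu>))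
       \<and> (2 < s \<longrightarrow> (maximizer s \<mu> \<longleftrightarrow>
            sphere_prob \<mu> \<and>
            (\<exists>e. orthonormal_basis e \<and>
                 emeasure \<mu> (\<Union>i. {e i, - e i}) = 1 \<and>
                 (\<forall>i. measure \<mu> {e i, - e i} = 1 / real CARD('n)))))"
  using part_i part_ii part_iii by blast

end
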